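(* For every nonnegative integer $p$, let $\mathfrak s\subset\mathfrak{sp}(V^{\mathfrak{sp}}_{p;2p})$ be an $\mathfrak{sl}_2$-subalgebra containing $\delta^{\mathfrak{sp}}_{p;2p}$, spanned by elements of degrees $-1,0,1$, for which $E=\operatorname{span}\{e_i\}$ and $F=\operatorname{span}\{f_i\}$ are irreducible submodules. Then the maximal $\operatorname{ad}\mathfrak s$-submodule $\mathfrak l^{\mathfrak{sp}}(V^{\mathfrak{sp}}_{p;2p})$ of $\mathfrak{sp}(V^{\mathfrak{sp}}_{p;2p})$ contained in the nonnegative-degree part is a Lie subalgebra isomorphic to $\mathfrak{sl}_2$. Moreover, for every $m\in\frac12\mathbb Z_{\rm odd}$, $m>0$, and the analogous $\mathfrak{sl}_2$-subalgebra of $\mathfrak{sp}(\mathcal L^{\mathfrak{sp}}_m)$ containing $\tau^{\mathfrak{sp}}_m$ (acting irreducibly), the corresponding maximal submodule $\mathfrak l^{\mathfrak{sp}}(\mathcal L^{\mathfrak{sp}}_m)$ is $0$.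
   Context: $V^{\mathfrak{sp}}_{p;2p}$ is the symplectic space with basis $e_{-p},\dots,e_p,f_{-p},\dots,f_p$ (index $=$ degree), $\sigma(e_i,e_j)=\sigma(f_i,f_j)=0$, $\sigma(e_i,f_j)=(-1)^{p-i}$ if $j=-i$ and $0$ otherwise; $\delta^{\mathfrak{sp}}_{p;2p}(e_i)=e_{i-1}$, $\delta^{\mathfrak{sp}}_{p;2p}(f_i)=f_{i-1}$ for $i>-p$, $\delta^{\mathfrak{sp}}_{p;2p}(e_{-p})=\delta^{\mathfrak{sp}}_{p;2p}(f_{-p})=0$. $\frac12\mathbb Z_{\rm odd}=\{i+\frac12:i\in\mathbb Z\}$; $\mathcal L^{\mathfrak{sp}}_m=\bigoplus_{i\in\frac12\mathbb Z_{\rm odd},|i|\le m}E_i$ with $\dim E_i=1$ in degree $i$, a symplectic space with $\sigma(E_i,E_j)=0$ unless $i+j=0$, and $\tau^{\mathfrak{sp}}_m\in\mathfrak{sp}(\mathcal L^{\mathfrak{sp}}_m)$ maps $E_i$ onto $E_{i-1}$ ($i>-m$) and $E_{-m}$ to $0$. Gradings on endomorphism spaces: degree-$k$ maps send degree-$i$ vectors to degree $i+k$. *)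

theory Defs
  imports Complex_Main
begin

text \<open>Endomorphisms of a finite-dimensional space with basis indexed by a finite set I
  are represented by matrices X :: 'i => 'i => complex, where X b a is the coefficient of
  the basis vector b in the image of the basis vector a; entries outside I x I are 0.
  Vectors are functions 'i => complex vanishing outside I.\<close>

definition mzero :: "'i \<Rightarrow> 'i \<Rightarrow> complex" where
  "mzero = (\<lambda>b a. 0)"

definition madd :: "('i \<Rightarrow> 'i \<Rightarrow> complex) \<Rightarrow> ('i \<Rightarrow> 'i \<Rightarrow> complex) \<Rightarrow> 'i \<Rightarrow> 'i \<Rightarrow> complex" where
  "madd X Y = (\<lambda>b a. X b a + Y b a)"

definition msc :: "complex \<Rightarrow> ('i \<Rightarrow> 'i \<Rightarrow> complex) \<Rightarrow> 'i \<Rightarrow> 'i \<Rightarrow> complex" where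
  "msc c X = (\<lambda>b a. c * X b a)"

definition mmul :: "'i set \<Rightarrow> ('i \<Rightarrow> 'i \<Rightarrow> complex) \<Rightarrow> ('i \<Rightarrow> 'i \<Rightarrow> complex) \<Rightarrow> 'i \<Rightarrow> 'i \<Rightarrow> complex" where
  "mmul I X Y = (\<lambda>b a. \<Sum>c\<in>I. X b c * Y c a)"

definition brk :: "'i set \<Rightarrow> ('i \<Rightarrow> 'i \<Rightarrow> complex) \<Rightarrow> ('i \<Rightarrow> 'i \<Rightarrow> complex) \<Rightarrow> 'i \<Rightarrow> 'i \<Rightarrow> complex" where
  "brk I X Y = (\<lambda>b a. mmul I X Y b a - mmul I Y X b a)"

definition mat_on :: "'i set \<Rightarrow> ('i \<Rightarrow> 'i \<Rightarrow> complex) \<Rightarrow> bool" where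
  "mat_on I X \<longleftrightarrow> (\<forall>a b. a \<notin> I \<or> b \<notin> I \<longrightarrow> X b a = 0)"

definition msubspace :: "'i set \<Rightarrow> ('i \<Rightarrow> 'i \<Rightarrow> complex) set \<Rightarrow> bool" where
  "msubspace I M \<longleftrightarrow> M \<subseteq> {X. mat_on I X} \<and> mzero \<in> M \<and>
     (\<forall>X\<in>M. \<forall>Y\<in>M. madd X Y \<in> M) \<and> (\<forall>c. \<forall>X\<in>M. msc c X \<in> M)"

definition lie_sub :: "'i set \<Rightarrow> ('i \<Rightarrow> 'i \<Rightarrow> complex) set \<Rightarrow> bool" where
  "lie_sub I M \<longleftrightarrow> msubspace I M \<and> (\<forall>X\<in>M. \<forall>Y\<in>M. brk I X Y \<in> M)"

definition sl2_set :: "(nat \<Rightarrow> nat \<Rightarrow> complex) set" where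
  "sl2_set = {A. mat_on {0,1} A \<and> A 0 0 + A 1 1 = 0}"

definition iso_sl2 :: "'i set \<Rightarrow> ('i \<Rightarrow> 'i \<Rightarrow> complex) set \<Rightarrow> bool" where
  "iso_sl2 I M \<longleftrightarrow> (\<exists>\<phi>. bij_betw \<phi> sl2_set M \<and>
     (\<forall>A\<in>sl2_set. \<forall>B\<in>sl2_set. \<phi> (madd A B) = madd (\<phi> A) (\<phi> B) \<and>
         \<phi> (brk {0,1} A B) = brk I (\<phi> A) (\<phi> B)) \<and>
     (\<forall>c. \<forall>A\<in>sl2_set. \<phi> (msc c A) = msc c (\<phi> A)))"

text \<open>sp(V,\<sigma>) where S a b = \<sigma>(basis a, basis b).\<close>
definition sp_set :: "'i set \<Rightarrow> ('i \<Rightarrow> 'i \<Rightarrow> complex) \<Rightarrow> ('i \<Rightarrow> 'i \<Rightarrow> complex) set" where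
  "sp_set I S = {X. mat_on I X \<and>
     (\<forall>a\<in>I. \<forall>b\<in>I. (\<Sum>c\<in>I. X c a * S c b) + (\<Sum>c\<in>I. S a c * X c b) = 0)}"

definition homog :: "('i \<Rightarrow> real) \<Rightarrow> real \<Rightarrow> ('i \<Rightarrow> 'i \<Rightarrow> complex) \<Rightarrow> bool" where
  "homog deg k X \<longleftrightarrow> (\<forall>a b. X b a \<noteq> 0 \<longrightarrow> deg b = deg a + k)"

definition nonneg :: "('i \<Rightarrow> real) \<Rightarrow> ('i \<Rightarrow> 'i \<Rightarrow> complex) \<Rightarrow> bool" where
  "nonneg deg X \<longleftrightarrow> (\<forall>a b. X b a \<noteq> 0 \<longrightarrow> deg a \<le> deg b)"

definition graded_sl2_sub :: "'i set \<Rightarrow> ('i \<Rightarrow> real) \<Rightarrow> ('i \<Rightarrow> 'i \<Rightarrow> complex) \<Rightarrow>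
    ('i \<Rightarrow> 'i \<Rightarrow> complex) set \<Rightarrow> bool" where
  "graded_sl2_sub I deg S s \<longleftrightarrow> lie_sub I s \<and> s \<subseteq> sp_set I S \<and> iso_sl2 I s \<and>
     (\<forall>X\<in>s. \<exists>A\<in>s. \<exists>B\<in>s. \<exists>C\<in>s. homog deg (-1) A \<and> homog deg 0 B \<and> homog deg 1 C \<and>
        X = madd A (madd B C))"

definition vsubspace :: "'i set \<Rightarrow> ('i \<Rightarrow> complex) set \<Rightarrow> bool" where
  "vsubspace I W \<longleftrightarrow> W \<subseteq> {v. \<forall>a. a \<notin> I \<longrightarrow> v a = 0} \<and> (\<lambda>_. 0) \<in> W \<and>
     (\<forall>v\<in>W. \<forall>w\<in>W. (\<lambda>a. v a + w a) \<in> W) \<and> (\<forall>c. \<forall>v\<in>W. (\<lambda>a. c * v a) \<in> W)"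

definition mapp :: "'i set \<Rightarrow> ('i \<Rightarrow> 'i \<Rightarrow> complex) \<Rightarrow> ('i \<Rightarrow> complex) \<Rightarrow> 'i \<Rightarrow> complex" where
  "mapp I X v = (\<lambda>b. \<Sum>a\<in>I. X b a * v a)"

definition invariant :: "'i set \<Rightarrow> ('i \<Rightarrow> 'i \<Rightarrow> complex) set \<Rightarrow> ('i \<Rightarrow> complex) set \<Rightarrow> bool" where
  "invariant I s W \<longleftrightarrow> (\<forall>X\<in>s. \<forall>v\<in>W. mapp I X v \<in> W)"

definition irreducible_sub :: "'i set \<Rightarrow> ('i \<Rightarrow> 'i \<Rightarrow> complex) set \<Rightarrow> ('i \<Rightarrow> complex) set \<Rightarrow> bool" where
  "irreducible_sub I s W \<longleftrightarrow> vsubspace I W \<and> invariant I s W \<and> W \<noteq> {\<lambda>_. 0} \<and>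
     (\<forall>U. vsubspace I U \<and> invariant I s U \<and> U \<subseteq> W \<longrightarrow> U = {\<lambda>_. 0} \<or> U = W)"

text \<open>The maximal ad s-submodule of sp(V) contained in the nonnegative-degree part
  (the union of all such submodules, which is their sum and hence itself the greatest one).\<close>
definition lmax :: "'i set \<Rightarrow> ('i \<Rightarrow> real) \<Rightarrow> ('i \<Rightarrow> 'i \<Rightarrow> complex) \<Rightarrow>
    ('i \<Rightarrow> 'i \<Rightarrow> complex) set \<Rightarrow> ('i \<Rightarrow> 'i \<Rightarrow> complex) set" where
  "lmax I deg S s = \<Union>{M. msubspace I M \<and> M \<subseteq> sp_set I S \<inter> {X. nonneg deg X} \<and>
       (\<forall>Y\<in>s. \<forall>X\<in>M. brk I Y X \<in> M)}"

text \<open>V^sp_{p;2p}: basis index (False,i) = e_i, (True,i) = f_i, |i| <= p; degree = i.\<close>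
definition Vidx :: "nat \<Rightarrow> (bool \<times> int) set" where
  "Vidx p = {(b, i). \<bar>i\<bar> \<le> int p}"

definition Vdeg :: "bool \<times> int \<Rightarrow> real" where
  "Vdeg x = real_of_int (snd x)"

definition Vform :: "nat \<Rightarrow> bool \<times> int \<Rightarrow> bool \<times> int \<Rightarrow> complex" where
  "Vform p x y = (if x \<in> Vidx p \<and> y \<in> Vidx p \<and> snd y = - snd x then
      (if \<not> fst x \<and> fst y then (-1) ^ nat (int p - snd x)
       else if fst x \<and> \<not> fst y then - ((-1) ^ nat (int p - snd y))
       else 0)
     else 0)"

definition Vdelta :: "nat \<Rightarrow> bool \<times> int \<Rightarrow> bool \<times> int \<Rightarrow> complex" where
  "Vdelta p y x = (if fst y = fst x \<and> snd y = snd x - 1 \<and> - int p < snd x \<and> snd x \<le> int p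
     then 1 else 0)"

definition Espace :: "nat \<Rightarrow> (bool \<times> int \<Rightarrow> complex) set" where
  "Espace p = {v. (\<forall>x. x \<notin> Vidx p \<longrightarrow> v x = 0) \<and> (\<forall>i. v (True, i) = 0)}"

definition Fspace :: "nat \<Rightarrow> (bool \<times> int \<Rightarrow> complex) set" where
  "Fspace p = {v. (\<forall>x. x \<notin> Vidx p \<longrightarrow> v x = 0) \<and> (\<forall>i. v (False, i) = 0)}"

text \<open>L^sp_m: basis E_i indexed by i in (1/2)Z_odd with |i| <= m; degree = i.\<close>
definition halfodd :: "real set" where
  "halfodd = {real_of_int i + 1/2 | i. True}"

definition Lidx :: "real \<Rightarrow> real set" where
  "Lidx m = {i. i \<in> halfodd \<and> \<bar>i\<bar> \<le> m}"

definition nondeg :: "'i set \<Rightarrow> ('i \<Rightarrow> 'i \<Rightarrow> complex) \<Rightarrow> bool" where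
  "nondeg I S \<longleftrightarrow> (\<forall>v. (\<forall>b\<in>I. (\<Sum>a\<in>I. v a * S a b) = 0) \<longrightarrow> (\<forall>a\<in>I. v a = 0))"

definition Lform_ok :: "real \<Rightarrow> (real \<Rightarrow> real \<Rightarrow> complex) \<Rightarrow> bool" where
  "Lform_ok m S \<longleftrightarrow> mat_on (Lidx m) S \<and> (\<forall>a b. S a b = - S b a) \<and>
     (\<forall>a b. S a b \<noteq> 0 \<longrightarrow> a + b = 0) \<and> nondeg (Lidx m) S"

definition Ltau_ok :: "real \<Rightarrow> (real \<Rightarrow> real \<Rightarrow> complex) \<Rightarrow> bool" where
  "Ltau_ok m \<tau> \<longleftrightarrow> mat_on (Lidx m) \<tau> \<and> (\<forall>a b. \<tau> b a \<noteq> 0 \<longrightarrow> b = a - 1) \<and>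
     (\<forall>a\<in>Lidx m. a > - m \<longrightarrow> \<tau> (a - 1) a \<noteq> 0)"

end

theory Submission
  imports Defs
begin

lemma sum_single:
  assumes "finite I" "\<And>c. c \<in> I \<Longrightarrow> c \<noteq> z \<Longrightarrow> f c = 0"
  shows "(\<Sum>c\<in>I. f c) = (if z \<in> I then f z else 0)"
proof -
  have "(\<Sum>c\<in>I. f c) = (\<Sum>c\<in>I. if c = z then f c else 0)"
    using assms(2) by (intro sum.cong) auto
  also have "\<dots> = (if z \<in> I then f z else 0)"
    using assms(1) by (simp add: sum.delta)
  finally show ?thesis .
qed

lemma mmul_diff_right:
  "mmul I X (\<lambda>b a. P b a - Q b a) = (\<lambda>b a. mmul I X P b a - mmul I X Q b a)"
  by (simp add: mmul_def fun_eq_iff right_diff_distrib sum_subtractf)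

lemma mmul_diff_left:
  "mmul I (\<lambda>b a. P b a - Q b a) X = (\<lambda>b a. mmul I P X b a - mmul I Q X b a)"
  by (simp add: mmul_def fun_eq_iff left_diff_distrib sum_subtractf)

lemma mmul_assoc:
  assumes "finite I"
  shows "mmul I (mmul I X Y) Z = mmul I X (mmul I Y Z)"
proof -
  have "(\<Sum>c\<in>I. (\<Sum>d\<in>I. X b d * Y d c) * Z c a) = (\<Sum>d\<in>I. X b d * (\<Sum>c\<in>I. Y d c * Z c a))" for a b
  proof -
    have "(\<Sum>c\<in>I. (\<Sum>d\<in>I. X b d * Y d c) * Z c a) = (\<Sum>c\<in>I. \<Sum>d\<in>I. X b d * Y d c * Z c a)"
      by (simp add: sum_distrib_right)
    also have "\<dots> = (\<Sum>d\<in>I. \<Sum>c\<in>I. X b d * Y d c * Z c a)"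
      by (rule sum.swap)
    also have "\<dots> = (\<Sum>d\<in>I. X b d * (\<Sum>c\<in>I. Y d c * Z c a))"
      by (simp add: sum_distrib_left mult.assoc)
    finally show ?thesis .
  qed
  then show ?thesis unfolding mmul_def by (simp add: fun_eq_iff)
qed

lemma jacobi:
  assumes "finite I"
  shows "brk I X (brk I Y Z) = madd (brk I (brk I X Y) Z) (brk I Y (brk I X Z))"
  unfolding brk_def madd_def mmul_diff_right mmul_diff_left mmul_assoc[OF assms]
  by (simp add: fun_eq_iff algebra_simps)

definition gcomp :: "('i \<Rightarrow> real) \<Rightarrow> real \<Rightarrow> ('i \<Rightarrow> 'i \<Rightarrow> complex) \<Rightarrow> 'i \<Rightarrow> 'i \<Rightarrow> complex" where
  "gcomp deg k X = (\<lambda>b a. if deg b = deg a + k then X b a else 0)"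

definition diagm :: "('i \<Rightarrow> 'i \<Rightarrow> complex) \<Rightarrow> bool" where
  "diagm X \<longleftrightarrow> (\<forall>a b. X b a \<noteq> 0 \<longrightarrow> b = a)"

lemma brk_madd_left: "brk I (madd X Y) Z = madd (brk I X Z) (brk I Y Z)"
  by (simp add: brk_def madd_def mmul_def fun_eq_iff algebra_simps sum.distrib)
lemma brk_madd_right: "brk I Z (madd X Y) = madd (brk I Z X) (brk I Z Y)"
  by (simp add: brk_def madd_def mmul_def fun_eq_iff algebra_simps sum.distrib)
lemma brk_msc_left: "brk I (msc c X) Z = msc c (brk I X Z)"
  by (simp add: brk_def msc_def mmul_def fun_eq_iff algebra_simps sum_distrib_left)
lemma brk_msc_right: "brk I Z (msc c X) = msc c (brk I Z X)"
  by (simp add: brk_def msc_def mmul_def fun_eq_iff algebra_simps sum_distrib_left)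
lemma brk_self: "brk I X X = mzero"
  by (simp add: brk_def mzero_def fun_eq_iff)
lemma brk_antisym: "brk I X Y = msc (-1) (brk I Y X)"
  by (simp add: brk_def msc_def fun_eq_iff)
lemma brk_mzero_right[simp]: "brk I X mzero = mzero"
  by (simp add: brk_def mzero_def mmul_def fun_eq_iff)
lemma brk_mzero_left[simp]: "brk I mzero X = mzero"
  by (simp add: brk_def mzero_def mmul_def fun_eq_iff)
lemma msc_mzero[simp]: "msc c mzero = mzero"
  by (simp add: msc_def mzero_def fun_eq_iff)
lemma madd_mzero[simp]: "madd mzero X = X" "madd X mzero = X"
  by (simp_all add: madd_def mzero_def fun_eq_iff)
lemma msc_msc: "msc c (msc d X) = msc (c*d) X"
  by (simp add: msc_def fun_eq_iff)
lemma msc_madd: "madd (msc c X) (msc d X) = msc (c+d) X"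
  by (simp add: msc_def madd_def fun_eq_iff algebra_simps)
lemma msc_eq_mzero: "msc c X = mzero \<longleftrightarrow> c = 0 \<or> X = mzero"
  by (auto simp add: msc_def mzero_def fun_eq_iff)

lemma mat_on_brk:
  assumes "mat_on I X" "mat_on I Y"
  shows "mat_on I (brk I X Y)"
  using assms unfolding mat_on_def brk_def mmul_def by auto

lemma mat_on_msc: "mat_on I X \<Longrightarrow> mat_on I (msc c X)"
  by (simp add: mat_on_def msc_def)
lemma mat_on_madd: "mat_on I X \<Longrightarrow> mat_on I Y \<Longrightarrow> mat_on I (madd X Y)"
  by (simp add: mat_on_def madd_def)

lemma homog_brk:
  assumes "homog deg k X" "homog deg l Y"
  shows "homog deg (k+l) (brk I X Y)"
  unfolding homog_def
proof (intro allI impI)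
  fix a b assume nz: "brk I X Y b a \<noteq> 0"
  show "deg b = deg a + (k + l)"
  proof (rule ccontr)
    assume ne: "deg b \<noteq> deg a + (k + l)"
    have "\<And>c. X b c * Y c a = 0" "\<And>c. Y b c * X c a = 0"
      using assms ne unfolding homog_def by (metis add.commute add.left_commute mult_eq_0_iff)+
    then have "(\<Sum>c\<in>I. X b c * Y c a) = 0" "(\<Sum>c\<in>I. Y b c * X c a) = 0"
      by (simp_all only: sum.neutral_const)
    then have "brk I X Y b a = 0" by (simp add: brk_def mmul_def)
    with nz show False by simp
  qed
qed

lemma homog_msc: "homog deg k X \<Longrightarrow> homog deg k (msc c X)"
  by (simp add: homog_def msc_def)

lemma comp_brk:
  assumes "homog deg l Y"
  shows "gcomp deg k (brk I Y X) = brk I Y (gcomp deg (k - l) X)"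
proof -
  have t1: "Y b c * gcomp deg (k - l) X c a = (if deg b = deg a + k then Y b c * X c a else 0)" for a b c
    using assms unfolding homog_def gcomp_def by (cases "Y b c = 0") auto
  have t2: "gcomp deg (k - l) X b c * Y c a = (if deg b = deg a + k then X b c * Y c a else 0)" for a b c
    using assms unfolding homog_def gcomp_def by (cases "Y c a = 0") auto
  show ?thesis
    unfolding fun_eq_iff
  proof (intro allI)
    fix b a
    show "gcomp deg k (brk I Y X) b a = brk I Y (gcomp deg (k - l) X) b a"
      unfolding brk_def mmul_def t1 t2 by (simp add: gcomp_def)
  qed
qed

lemma comp_iter:
  assumes "homog deg l Y"
  shows "gcomp deg k ((brk I Y ^^ r) X) = (brk I Y ^^ r) (gcomp deg (k - real r * l) X)"
proof (induction r arbitrary: k)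
  case 0 then show ?case by simp
next
  case (Suc r)
  have "gcomp deg k ((brk I Y ^^ Suc r) X) = brk I Y (gcomp deg (k - l) ((brk I Y ^^ r) X))"
    by (simp add: comp_brk[OF assms])
  also have "\<dots> = (brk I Y ^^ Suc r) (gcomp deg (k - real (Suc r) * l) X)"
    using Suc by (simp add: algebra_simps)
  finally show ?case .
qed

lemma homog_iter:
  assumes "homog deg l Y" "homog deg k X"
  shows "homog deg (k + real r * l) ((brk I Y ^^ r) X)"
proof (induction r)
  case 0 then show ?case using assms by simp
next
  case (Suc r)
  then show ?case using homog_brk[OF assms(1) Suc] by (simp add: algebra_simps)
qed

lemma mat_on_iter:
  assumes "mat_on I Y" "mat_on I X"
  shows "mat_on I ((brk I Y ^^ r) X)"
  by (induction r) (auto simp add: assms mat_on_brk)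

lemma homog_comp: "homog deg k (gcomp deg k X)"
  by (simp add: homog_def gcomp_def)
lemma mat_on_comp: "mat_on I X \<Longrightarrow> mat_on I (gcomp deg k X)"
  by (simp add: mat_on_def gcomp_def)

lemma nonneg_comp:
  assumes "nonneg deg X" "k < 0"
  shows "gcomp deg k X = mzero"
  using assms by (force simp add: nonneg_def gcomp_def mzero_def fun_eq_iff)

lemma brk_iter_msc: "(brk I D ^^ r) (msc c X) = msc c ((brk I D ^^ r) X)"
  by (induction r) (simp_all add: brk_msc_right)

lemma iter_mzero: "(brk I D ^^ r) mzero = mzero"
  by (induction r) simp_all

lemma sl2_lower:
  assumes fin: "finite I" and mD: "mat_on I D" and hD: "homog deg (-1) D"
    and EDH: "brk I E D = H"
    and Hp: "\<And>k Z. mat_on I Z \<Longrightarrow> homog deg k Z \<Longrightarrow> brk I H Z = msc (complex_of_real (2*k)) Z"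
    and mW: "mat_on I W" and hW: "homog deg (real n) W" and EW: "brk I E W = mzero"
  shows "brk I E ((brk I D ^^ Suc i) W) =
           msc (of_nat (Suc i) * (2 * of_nat n - of_nat i)) ((brk I D ^^ i) W)"
proof (induction i)
  case 0
  have "brk I E (brk I D W) = madd (brk I H W) (brk I D (brk I E W))"
    using jacobi[OF fin, of E D W] EDH by simp
  also have "\<dots> = msc (complex_of_real (2 * real n)) W"
    using Hp[OF mW hW] EW by simp
  finally show ?case by simp
next
  case (Suc i)
  let ?Z = "(brk I D ^^ Suc i) W"
  have mZ: "mat_on I ?Z" by (rule mat_on_iter[OF mD mW])
  have hZ: "homog deg (real n + real (Suc i) * -1) ?Z" by (rule homog_iter[OF hD hW])
  have "brk I E ((brk I D ^^ Suc (Suc i)) W) = brk I E (brk I D ?Z)" by simp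
  also have "\<dots> = madd (brk I H ?Z) (brk I D (brk I E ?Z))"
    using jacobi[OF fin, of E D ?Z] EDH by simp
  also have "\<dots> = madd (msc (complex_of_real (2 * (real n + real (Suc i) * -1))) ?Z)
       (msc (of_nat (Suc i) * (2 * of_nat n - of_nat i)) ?Z)"
    using Hp[OF mZ hZ] Suc by (simp add: brk_msc_right)
  also have "\<dots> = msc (of_nat (Suc (Suc i)) * (2 * of_nat n - of_nat (Suc i))) ?Z"
    by (simp add: msc_madd algebra_simps)
  finally show ?case .
qed

lemma sl2_nonvanish:
  assumes fin: "finite I" and mD: "mat_on I D" and hD: "homog deg (-1) D"
    and EDH: "brk I E D = H"
    and Hp: "\<And>k Z. mat_on I Z \<Longrightarrow> homog deg k Z \<Longrightarrow> brk I H Z = msc (complex_of_real (2*k)) Z"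
    and mW: "mat_on I W" and hW: "homog deg (real n) W" and EW: "brk I E W = mzero"
    and W0: "W \<noteq> mzero"
  shows "i \<le> 2 * n \<Longrightarrow> (brk I D ^^ i) W \<noteq> mzero"
proof (induction i)
  case 0 then show ?case using W0 by simp
next
  case (Suc i)
  show ?case
  proof
    assume z: "(brk I D ^^ Suc i) W = mzero"
    have "msc (of_nat (Suc i) * (2 * of_nat n - of_nat i)) ((brk I D ^^ i) W) = mzero"
      using sl2_lower[OF fin mD hD EDH Hp mW hW EW, of i] z by simp
    moreover have "(of_nat (Suc i) * (2 * of_nat n - of_nat i) :: complex) \<noteq> 0"
    proof -
      have A: "(2 * of_nat n - of_nat i :: complex) = of_nat (2*n - i)" using Suc.prems by (simp add: of_nat_diff)
      have B: "(of_nat (Suc i) * of_nat (2*n - i) :: complex) = of_nat (Suc i * (2*n - i))" by (simp only: of_nat_mult)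
      show ?thesis unfolding A B of_nat_eq_0_iff using Suc.prems by simp
    qed
    ultimately have "(brk I D ^^ i) W = mzero" by (simp add: msc_eq_mzero)
    with Suc show False by simp
  qed
qed

lemma closure_iter:
  assumes "\<And>X. X \<in> M \<Longrightarrow> brk I D X \<in> M" "X \<in> M"
  shows "(brk I D ^^ r) X \<in> M"
  by (induction r) (simp_all add: assms)

lemma lemmaA:
  assumes fin: "finite I" and mD: "mat_on I D" and mE: "mat_on I E"
    and hD: "homog deg (-1) D" and hE: "homog deg 1 E"
    and EDH: "brk I E D = H"
    and Hp: "\<And>k Z. mat_on I Z \<Longrightarrow> homog deg k Z \<Longrightarrow> brk I H Z = msc (complex_of_real (2*k)) Z"
    and nil: "\<And>k Z. k > N \<Longrightarrow> mat_on I Z \<Longrightarrow> homog deg k Z \<Longrightarrow> Z = mzero"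
    and intd: "\<And>a b. a \<in> I \<Longrightarrow> b \<in> I \<Longrightarrow> deg b - deg a \<in> \<int>"
    and Mp: "\<And>X. X \<in> M \<Longrightarrow> mat_on I X \<and> nonneg deg X \<and> brk I D X \<in> M \<and> brk I E X \<in> M"
    and XM: "X \<in> M"
  shows "homog deg 0 X"
proof (rule ccontr)
  assume "\<not> homog deg 0 X"
  then obtain a b where nz: "X b a \<noteq> 0" and ne: "deg b \<noteq> deg a" unfolding homog_def by auto
  have mX: "mat_on I X" and nX: "nonneg deg X" using Mp[OF XM] by auto
  have ab: "a \<in> I" "b \<in> I" using mX nz unfolding mat_on_def by auto
  have "deg a \<le> deg b" using nX nz unfolding nonneg_def by auto
  with ne have gt: "deg b - deg a > 0" by simp
  obtain z :: int where z: "deg b - deg a = of_int z" using intd[OF ab] by (auto elim: Ints_cases)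
  define K where "K = nat z"
  have K: "deg b - deg a = real K" "K \<ge> 1" using z gt by (auto simp: K_def)
  define Y where "Y = gcomp deg (real K) X"
  have Ynz: "Y \<noteq> mzero"
  proof
    assume "Y = mzero"
    then have "Y b a = 0" by (simp add: mzero_def)
    then show False using nz K unfolding Y_def gcomp_def by (simp add: algebra_simps)
  qed
  have mY: "mat_on I Y" unfolding Y_def by (rule mat_on_comp[OF mX])
  have hY: "homog deg (real K) Y" unfolding Y_def by (rule homog_comp)
  have hYj: "homog deg (real K + real j) ((brk I E ^^ j) Y)" for j
    using homog_iter[OF hE hY, where r=j and I=I] by simp
  have mYj: "mat_on I ((brk I E ^^ j) Y)" for j by (rule mat_on_iter[OF mE mY])
  define Nn where "Nn = nat (ceiling N)"
  have big: "(brk I E ^^ j) Y = mzero" if "j > Nn" for j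
  proof -
    have "real j > N" using that unfolding Nn_def by linarith
    then have "real K + real j > N" by simp
    then show ?thesis using nil mYj hYj by blast
  qed
  define j0 where "j0 = (GREATEST j. (brk I E ^^ j) Y \<noteq> mzero)"
  have ex: "(brk I E ^^ 0) Y \<noteq> mzero" using Ynz by simp
  have bd: "\<forall>j. (brk I E ^^ j) Y \<noteq> mzero \<longrightarrow> j \<le> Nn" using big by (meson not_le)
  have W0: "(brk I E ^^ j0) Y \<noteq> mzero" unfolding j0_def by (rule GreatestI_nat[where P="\<lambda>j. (brk I E ^^ j) Y \<noteq> mzero", OF ex]) (use bd in blast)
  have Wmax: "(brk I E ^^ Suc j0) Y = mzero"
  proof (rule ccontr)
    assume "(brk I E ^^ Suc j0) Y \<noteq> mzero"
    then have "Suc j0 \<le> j0" unfolding j0_def by (rule Greatest_le_nat) (use bd in blast)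
    then show False by simp
  qed
  define W where "W = (brk I E ^^ j0) Y"
  define n where "n = K + j0"
  have hW: "homog deg (real n) W" using hYj[of j0] unfolding W_def n_def by simp
  have mW: "mat_on I W" unfolding W_def by (rule mYj)
  have EW: "brk I E W = mzero" using Wmax unfolding W_def by simp
  have DW: "(brk I D ^^ (2*n)) W \<noteq> mzero"
    by (rule sl2_nonvanish[OF fin mD hD EDH Hp mW hW EW]) (use W0 W_def in auto)
  define Z where "Z = (brk I D ^^ (2*n)) ((brk I E ^^ j0) X)"
  have ZM: "Z \<in> M" unfolding Z_def
    by (rule closure_iter) (use Mp closure_iter[of M I E] XM in auto)
  have "gcomp deg (- real n) Z = (brk I D ^^ (2*n)) (gcomp deg (- real n - real (2*n) * -1) ((brk I E ^^ j0) X))"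
    unfolding Z_def by (rule comp_iter[OF hD])
  also have "\<dots> = (brk I D ^^ (2*n)) ((brk I E ^^ j0) (gcomp deg (real n - real j0 * 1) X))"
    by (simp add: comp_iter[OF hE])
  also have "\<dots> = (brk I D ^^ (2*n)) W"
    unfolding W_def Y_def n_def by simp
  finally have "gcomp deg (- real n) Z \<noteq> mzero" using DW by simp
  moreover have "gcomp deg (- real n) Z = mzero"
    by (rule nonneg_comp) (use Mp[OF ZM] K(2) n_def in auto)
  ultimately show False by simp
qed

lemma H_prop:
  assumes fin: "finite I" and dH: "diagm H"
    and Hd: "\<And>a b. a \<in> I \<Longrightarrow> b \<in> I \<Longrightarrow> H b b - H a a = complex_of_real (2 * (deg b - deg a))"
    and mZ: "mat_on I Z" and hZ: "homog deg k Z"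
  shows "brk I H Z = msc (complex_of_real (2*k)) Z"
  unfolding fun_eq_iff
proof (intro allI)
  fix b a
  have s1: "(\<Sum>c\<in>I. H b c * Z c a) = (if b \<in> I then H b b * Z b a else 0)"
    by (rule sum_single[OF fin]) (use dH in \<open>auto simp: diagm_def\<close>)
  have s2: "(\<Sum>c\<in>I. Z b c * H c a) = (if a \<in> I then Z b a * H a a else 0)"
    by (rule sum_single[OF fin]) (use dH in \<open>auto simp: diagm_def\<close>)
  show "brk I H Z b a = msc (complex_of_real (2*k)) Z b a"
  proof (cases "a \<in> I \<and> b \<in> I \<and> Z b a \<noteq> 0")
    case True
    then have "deg b = deg a + k" using hZ unfolding homog_def by auto
    then show ?thesis using True Hd[of a b]
      unfolding brk_def mmul_def s1 s2 by (simp add: msc_def algebra_simps)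
  next
    case False
    then have "Z b a = 0" using mZ unfolding mat_on_def by auto
    then show ?thesis unfolding brk_def mmul_def s1 s2 by (simp add: msc_def)
  qed
qed

lemma diagm_brk:
  assumes fin: "finite I" and d1: "diagm B" and d2: "diagm B'"
  shows "brk I B B' = mzero"
  unfolding fun_eq_iff
proof (intro allI)
  fix b a
  have s1: "(\<Sum>c\<in>I. B b c * B' c a) = (if a \<in> I then B b a * B' a a else 0)"
    by (rule sum_single[OF fin]) (use d2 in \<open>auto simp: diagm_def\<close>)
  have s2: "(\<Sum>c\<in>I. B' b c * B c a) = (if a \<in> I then B' b a * B a a else 0)"
    by (rule sum_single[OF fin]) (use d1 in \<open>auto simp: diagm_def\<close>)
  show "brk I B B' b a = mzero b a"
  proof (cases "b = a")
    case True then show ?thesis unfolding brk_def mmul_def s1 s2 by (simp add: mzero_def)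
  next
    case False
    then have "B b a = 0" "B' b a = 0" using d1 d2 unfolding diagm_def by auto
    then show ?thesis unfolding brk_def mmul_def s1 s2 by (simp add: mzero_def)
  qed
qed

definition e0 :: "nat \<Rightarrow> nat \<Rightarrow> complex" where "e0 = (\<lambda>i j. if i = 0 \<and> j = 1 then 1 else 0)"
definition f0 :: "nat \<Rightarrow> nat \<Rightarrow> complex" where "f0 = (\<lambda>i j. if i = 1 \<and> j = 0 then 1 else 0)"
definition h0 :: "nat \<Rightarrow> nat \<Rightarrow> complex" where
  "h0 = (\<lambda>i j. if i = 0 \<and> j = 0 then 1 else if i = 1 \<and> j = 1 then -1 else 0)"

lemma sl2_elems: "e0 \<in> sl2_set" "f0 \<in> sl2_set" "h0 \<in> sl2_set"
  by (auto simp: sl2_set_def mat_on_def e0_def f0_def h0_def)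

lemma mmul01: "mmul {0::nat,1} X Y = (\<lambda>b a. X b 0 * Y 0 a + X b 1 * Y 1 a)"
  by (simp add: mmul_def fun_eq_iff)

lemma brk_ef: "brk {0,1} e0 f0 = h0"
  unfolding brk_def mmul01 by (auto simp: e0_def f0_def h0_def fun_eq_iff)
lemma brk_he: "brk {0,1} h0 e0 = msc 2 e0"
  unfolding brk_def mmul01 by (auto simp: e0_def msc_def h0_def fun_eq_iff)
lemma brk_h2e: "brk {0,1} h0 (msc 2 e0) = msc 4 e0"
  unfolding brk_def mmul01 by (auto simp: e0_def msc_def h0_def fun_eq_iff)

lemma sl2_closed:
  assumes "A \<in> sl2_set" "B \<in> sl2_set"
  shows "madd A B \<in> sl2_set" "msc c A \<in> sl2_set" "brk {0,1} A B \<in> sl2_set" "mzero \<in> sl2_set"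
proof -
  show "madd A B \<in> sl2_set" using assms by (auto simp: sl2_set_def mat_on_def madd_def algebra_simps)
  show "msc c A \<in> sl2_set" using assms by (auto simp: sl2_set_def mat_on_def msc_def distrib_left[symmetric])
  show "brk {0,1} A B \<in> sl2_set" using assms unfolding brk_def mmul01 by (auto simp: sl2_set_def mat_on_def algebra_simps)
  show "mzero \<in> sl2_set" by (auto simp: sl2_set_def mat_on_def mzero_def)
qed

lemma iso_facts:
  assumes "iso_sl2 I s"
  obtains \<phi> where "bij_betw \<phi> sl2_set s"
    "\<And>A B. A \<in> sl2_set \<Longrightarrow> B \<in> sl2_set \<Longrightarrow> \<phi> (madd A B) = madd (\<phi> A) (\<phi> B)"
    "\<And>A B. A \<in> sl2_set \<Longrightarrow> B \<in> sl2_set \<Longrightarrow> \<phi> (brk {0,1} A B) = brk I (\<phi> A) (\<phi> B)"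
    "\<And>c A. A \<in> sl2_set \<Longrightarrow> \<phi> (msc c A) = msc c (\<phi> A)"
  using assms unfolding iso_sl2_def by blast

lemma lemmaB:
  assumes iso: "iso_sl2 I s" and DS: "D \<in> s"
    and dec: "\<And>Y. Y \<in> s \<Longrightarrow> \<exists>\<alpha> B. B \<in> s \<and> diagm B \<and> Y = madd (msc \<alpha> D) B"
    and DB: "\<And>B. B \<in> s \<Longrightarrow> diagm B \<Longrightarrow> \<exists>c. brk I D B = msc c D"
    and fin: "finite I"
  shows False
proof -
  have br: "\<exists>c. brk I Y Y' = msc c D" if YY: "Y \<in> s" "Y' \<in> s" for Y Y'
  proof -
    obtain \<alpha> B where B: "B \<in> s" "diagm B" "Y = madd (msc \<alpha> D) B" using dec[OF YY(1)] by blast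
    obtain \<alpha>' B' where B': "B' \<in> s" "diagm B'" "Y' = madd (msc \<alpha>' D) B'" using dec[OF YY(2)] by blast
    obtain c where c: "brk I D B = msc c D" using DB B by blast
    obtain c' where c': "brk I D B' = msc c' D" using DB B' by blast
    have c2: "brk I B D = msc (-c) D" using c brk_antisym[of I B D] by (simp add: msc_def fun_eq_iff)
    have "brk I Y Y' = msc (\<alpha> * c' - \<alpha>' * c) D"
      unfolding B(3) B'(3) brk_madd_left brk_madd_right brk_msc_left brk_msc_right
      using c' c2 diagm_brk[OF fin B(2) B'(2)]
      by (simp add: brk_self msc_def madd_def mzero_def fun_eq_iff algebra_simps)
    then show ?thesis by blast
  qed
  obtain \<phi> where bij: "bij_betw \<phi> sl2_set s"
    and ad: "\<And>A B. A \<in> sl2_set \<Longrightarrow> B \<in> sl2_set \<Longrightarrow> \<phi> (madd A B) = madd (\<phi> A) (\<phi> B)"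
    and br\<phi>: "\<And>A B. A \<in> sl2_set \<Longrightarrow> B \<in> sl2_set \<Longrightarrow> \<phi> (brk {0,1} A B) = brk I (\<phi> A) (\<phi> B)"
    and sc: "\<And>c A. A \<in> sl2_set \<Longrightarrow> \<phi> (msc c A) = msc c (\<phi> A)"
    using iso_facts[OF iso] by blast
  have inS: "\<phi> A \<in> s" if "A \<in> sl2_set" for A using bij that by (auto simp: bij_betw_def)
  note E = sl2_elems
  have "\<phi> (msc 4 e0) = brk I (brk I (\<phi> e0) (\<phi> f0)) (brk I (\<phi> h0) (\<phi> e0))"
  proof -
    have "msc 4 e0 = brk {0,1} (brk {0,1} e0 f0) (brk {0,1} h0 e0)"
      by (simp only: brk_ef brk_he brk_h2e)
    then have "\<phi> (msc 4 e0) = brk I (\<phi> (brk {0,1} e0 f0)) (\<phi> (brk {0,1} h0 e0))"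
      using br\<phi> sl2_closed E by metis
    then show ?thesis using br\<phi> E by metis
  qed
  moreover obtain c where "brk I (\<phi> e0) (\<phi> f0) = msc c D" using br inS E by blast
  moreover obtain c' where "brk I (\<phi> h0) (\<phi> e0) = msc c' D" using br inS E by blast
  ultimately have z: "\<phi> (msc 4 e0) = mzero"
    by (simp add: brk_msc_left brk_msc_right brk_self)
  have "\<phi> mzero = mzero"
  proof -
    have "mzero = msc 0 e0" by (simp add: msc_def mzero_def fun_eq_iff)
    then show ?thesis using sc[OF E(1), of 0] by (simp add: msc_def mzero_def fun_eq_iff)
  qed
  with z have "\<phi> (msc 4 e0) = \<phi> mzero" by simp
  moreover have "msc 4 e0 \<in> sl2_set" "mzero \<in> sl2_set" using sl2_closed E by auto
  ultimately have "msc 4 e0 = mzero" using bij unfolding bij_betw_def inj_on_def by blast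
  then show False by (simp add: msc_def mzero_def e0_def fun_eq_iff) (metis one_neq_zero zero_neq_one)
qed

lemma Vidx_eq: "Vidx p = UNIV \<times> {- int p..int p}"
  by (auto simp: Vidx_def)

lemma finite_Vidx: "finite (Vidx p)"
  by (simp add: Vidx_eq)

lemma in_Vidx: "(x, i) \<in> Vidx p \<longleftrightarrow> - int p \<le> i \<and> i \<le> int p"
  by (auto simp: Vidx_def)

lemma mat_on_Vdelta: "mat_on (Vidx p) (Vdelta p)"
  by (auto simp: mat_on_def Vdelta_def Vidx_def)

lemma homog_Vdelta: "homog Vdeg (-1) (Vdelta p)"
  by (auto simp: homog_def Vdelta_def Vdeg_def)

lemma homog_V:
  assumes "homog Vdeg k X" "X b a \<noteq> 0"
  shows "real_of_int (snd b) = real_of_int (snd a) + k"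
proof -
  have "Vdeg b = Vdeg a + k" using assms unfolding homog_def by blast
  then show ?thesis by (simp add: Vdeg_def)
qed

lemma homog_V_int:
  assumes "homog Vdeg (real_of_int k) X" "X b a \<noteq> 0"
  shows "snd b = snd a + k"
  using homog_V[OF assms] by linarith

lemma mat_onD1: "mat_on I X \<Longrightarrow> b \<notin> I \<Longrightarrow> X b a = 0"
  by (simp add: mat_on_def)
lemma mat_onD2: "mat_on I X \<Longrightarrow> a \<notin> I \<Longrightarrow> X b a = 0"
  by (simp add: mat_on_def)

lemma sum_delta_right:
  assumes "mat_on (Vidx p) X"
  shows "(\<Sum>c\<in>Vidx p. X b c * Vdelta p c a) = (if a \<in> Vidx p then X b (fst a, snd a - 1) else 0)"
proof -
  have "(\<Sum>c\<in>Vidx p. X b c * Vdelta p c a) =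
     (if (fst a, snd a - 1) \<in> Vidx p then X b (fst a, snd a - 1) * Vdelta p (fst a, snd a - 1) a else 0)"
    by (rule sum_single[OF finite_Vidx]) (auto simp: Vdelta_def)
  moreover have "X b (fst a, snd a - 1) = 0" if "(fst a, snd a - 1) \<notin> Vidx p"
    using mat_onD2[OF assms that] .
  ultimately show ?thesis
    by (cases a) (auto simp: Vdelta_def in_Vidx)
qed

lemma sum_delta_left:
  assumes "mat_on (Vidx p) X"
  shows "(\<Sum>c\<in>Vidx p. Vdelta p b c * X c a) = (if b \<in> Vidx p then X (fst b, snd b + 1) a else 0)"
proof -
  have "(\<Sum>c\<in>Vidx p. Vdelta p b c * X c a) =
     (if (fst b, snd b + 1) \<in> Vidx p then Vdelta p b (fst b, snd b + 1) * X (fst b, snd b + 1) a else 0)"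
    by (rule sum_single[OF finite_Vidx]) (auto simp: Vdelta_def)
  moreover have "X (fst b, snd b + 1) a = 0" if "(fst b, snd b + 1) \<notin> Vidx p"
    using mat_onD1[OF assms that] .
  ultimately show ?thesis
    by (cases b) (auto simp: Vdelta_def in_Vidx)
qed

lemma brk_Y_delta:
  assumes "mat_on (Vidx p) Y"
  shows "brk (Vidx p) Y (Vdelta p) b a =
    (if a \<in> Vidx p then Y b (fst a, snd a - 1) else 0) - (if b \<in> Vidx p then Y (fst b, snd b + 1) a else 0)"
  unfolding brk_def mmul_def sum_delta_right[OF assms] sum_delta_left[OF assms] ..

lemma brk_delta_Y:
  assumes "mat_on (Vidx p) Y"
  shows "brk (Vidx p) (Vdelta p) Y b a =
    (if b \<in> Vidx p then Y (fst b, snd b + 1) a else 0) - (if a \<in> Vidx p then Y b (fst a, snd a - 1) else 0)"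
  unfolding brk_def mmul_def sum_delta_right[OF assms] sum_delta_left[OF assms] ..

definition nomix :: "(bool \<times> int \<Rightarrow> bool \<times> int \<Rightarrow> complex) \<Rightarrow> bool" where
  "nomix Y \<longleftrightarrow> (\<forall>x y i j. x \<noteq> y \<longrightarrow> Y (x, j) (y, i) = 0)"

lemma mapp_ind:
  assumes "finite I"
  shows "mapp I Y (\<lambda>z. if z = c then 1 else 0) = (\<lambda>b. if c \<in> I then Y b c else 0)"
  unfolding mapp_def fun_eq_iff
proof (intro allI)
  fix b show "(\<Sum>a\<in>I. Y b a * (if a = c then 1 else 0)) = (if c \<in> I then Y b c else 0)"
    by (subst sum_single[OF assms, where z=c]) auto
qed

lemma nomix_inv:
  assumes inE: "invariant (Vidx p) s (Espace p)" and inF: "invariant (Vidx p) s (Fspace p)"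
    and Ys: "Y \<in> s" and mY: "mat_on (Vidx p) Y"
  shows "nomix Y"
  unfolding nomix_def
proof (intro allI impI)
  fix x y :: bool and i j :: int assume xy: "x \<noteq> y"
  show "Y (x, j) (y, i) = 0"
  proof (cases "(y, i) \<in> Vidx p")
    case False then show ?thesis using mY by (auto simp: mat_on_def)
  next
    case True
    let ?v = "\<lambda>z. if z = (y, i) then (1::complex) else 0"
    show ?thesis
    proof (cases y)
      case False
      have "?v \<in> Espace p" using True False by (auto simp: Espace_def)
      then have "mapp (Vidx p) Y ?v \<in> Espace p" using inE Ys by (auto simp: invariant_def)
      then show ?thesis using True False xy unfolding mapp_ind[OF finite_Vidx] by (auto simp: Espace_def)
    next
      case T: True
      have "?v \<in> Fspace p" using True T by (auto simp: Fspace_def)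
      then have "mapp (Vidx p) Y ?v \<in> Fspace p" using inF Ys by (auto simp: invariant_def)
      then show ?thesis using True T xy unfolding mapp_ind[OF finite_Vidx] by (auto simp: Fspace_def)
    qed
  qed
qed

lemma in_Vidx': "a \<in> Vidx p \<longleftrightarrow> - int p \<le> snd a \<and> snd a \<le> int p"
  by (cases a) (simp add: in_Vidx)

lemma graded_parts:
  assumes "graded_sl2_sub I deg S s"
  shows "lie_sub I s" "s \<subseteq> sp_set I S" "iso_sl2 I s"
    "\<And>X. X \<in> s \<Longrightarrow> \<exists>A\<in>s. \<exists>B\<in>s. \<exists>C\<in>s. homog deg (-1) A \<and> homog deg 0 B \<and> homog deg 1 C \<and>
        X = madd A (madd B C)"
  using assms unfolding graded_sl2_sub_def by blast+

lemma lie_sub_brk: "lie_sub I s \<Longrightarrow> X \<in> s \<Longrightarrow> Y \<in> s \<Longrightarrow> brk I X Y \<in> s"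
  by (simp add: lie_sub_def)
lemma lie_sub_msc: "lie_sub I s \<Longrightarrow> X \<in> s \<Longrightarrow> msc c X \<in> s"
  by (simp add: lie_sub_def msubspace_def)
lemma lie_sub_madd: "lie_sub I s \<Longrightarrow> X \<in> s \<Longrightarrow> Y \<in> s \<Longrightarrow> madd X Y \<in> s"
  by (simp add: lie_sub_def msubspace_def)
lemma lie_sub_mzero: "lie_sub I s \<Longrightarrow> mzero \<in> s"
  by (simp add: lie_sub_def msubspace_def)
lemma sp_mat_on: "X \<in> sp_set I S \<Longrightarrow> mat_on I X"
  by (simp add: sp_set_def)

lemma graded_homog_zero:
  assumes g: "graded_sl2_sub I deg S s" and Y: "Y \<in> s" and h: "homog deg k Y"
    and k: "k \<noteq> -1" "k \<noteq> 0" "k \<noteq> 1"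
  shows "Y = mzero"
proof -
  obtain A B C where ABC: "homog deg (-1) A" "homog deg 0 B" "homog deg 1 C" "Y = madd A (madd B C)"
    using graded_parts(4)[OF g Y] by blast
  show ?thesis unfolding fun_eq_iff mzero_def
  proof (intro allI, rule ccontr)
    fix b a assume nz: "Y b a \<noteq> 0"
    then have d: "deg b = deg a + k" using h unfolding homog_def by blast
    from nz ABC(4) have "A b a \<noteq> 0 \<or> B b a \<noteq> 0 \<or> C b a \<noteq> 0" by (auto simp: madd_def)
    then show False using ABC(1-3) d k unfolding homog_def by force
  qed
qed

lemma sg_step:
  assumes "i \<le> int p"
  shows "(-1::complex) ^ nat (int p - (i - 1)) = - ((-1) ^ nat (int p - i))"
proof -
  have "nat (int p - (i - 1)) = Suc (nat (int p - i))" using assms by simp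
  then show ?thesis by simp
qed

lemma sg_neg:
  assumes "\<bar>i\<bar> \<le> int p"
  shows "(-1::complex) ^ nat (int p + i) = (-1) ^ nat (int p - i)"
proof -
  have "even (nat (int p + i)) \<longleftrightarrow> even (nat (int p - i))"
    using assms by (simp add: even_nat_iff)
  then show ?thesis by (simp add: minus_one_power_iff)
qed

lemma Vform_nz: "Vform p c b \<noteq> 0 \<Longrightarrow> c = (\<not> fst b, - snd b)"
  unfolding Vform_def by (cases c; cases b) (simp add: in_Vidx split: if_splits)
lemma Vform_anti: "Vform p a c = - Vform p c a"
  by (cases a; cases c) (auto simp add: Vform_def in_Vidx)

lemma Vform_val:
  assumes "\<bar>i\<bar> \<le> int p"
  shows "Vform p (x, i) (\<not> x, - i) = (if x then - ((-1) ^ nat (int p - i)) else (-1) ^ nat (int p - i))"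
  using assms sg_neg[of "i" p] by (auto simp: Vform_def in_Vidx)

lemma sp_entry:
  assumes X: "X \<in> sp_set (Vidx p) (Vform p)" and a: "a \<in> Vidx p" and b: "b \<in> Vidx p"
  shows "X (\<not> fst b, - snd b) a * Vform p (\<not> fst b, - snd b) b +
         Vform p a (\<not> fst a, - snd a) * X (\<not> fst a, - snd a) b = 0"
proof -
  have sp: "(\<Sum>c\<in>Vidx p. X c a * Vform p c b) + (\<Sum>c\<in>Vidx p. Vform p a c * X c b) = 0"
    using X a b unfolding sp_set_def by blast
  have bV: "(\<not> fst b, - snd b) \<in> Vidx p" using b by (cases b) (auto simp: in_Vidx)
  have aV: "(\<not> fst a, - snd a) \<in> Vidx p" using a by (cases a) (auto simp: in_Vidx)
  have s1: "(\<Sum>c\<in>Vidx p. X c a * Vform p c b) = X (\<not> fst b, - snd b) a * Vform p (\<not> fst b, - snd b) b"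
  proof -
    have "Vform p c b = 0" if "c \<noteq> (\<not> fst b, - snd b)" for c using Vform_nz that by blast
    then show ?thesis using sum_single[OF finite_Vidx, where z="(\<not> fst b, - snd b)" and f="\<lambda>c. X c a * Vform p c b"] bV
      by simp
  qed
  have s2: "(\<Sum>c\<in>Vidx p. Vform p a c * X c b) = Vform p a (\<not> fst a, - snd a) * X (\<not> fst a, - snd a) b"
  proof -
    have "Vform p a c = 0" if "c \<noteq> (\<not> fst a, - snd a)" for c using Vform_nz Vform_anti that
      by (metis neg_equal_0_iff_equal)
    then show ?thesis using sum_single[OF finite_Vidx, where z="(\<not> fst a, - snd a)" and f="\<lambda>c. Vform p a c * X c b"] aV
      by simp
  qed
  show ?thesis using sp s1 s2 by simp
qed

definition Eop :: "nat \<Rightarrow> bool \<times> int \<Rightarrow> bool \<times> int \<Rightarrow> complex" where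
  "Eop p b a = (if fst b = fst a \<and> snd b = snd a + 1 \<and> - int p \<le> snd a \<and> snd a < int p
     then of_int ((int p - snd a) * (int p + snd a + 1)) else 0)"

locale pcase =
  fixes p :: nat and s :: "(bool \<times> int \<Rightarrow> bool \<times> int \<Rightarrow> complex) set"
  assumes g: "graded_sl2_sub (Vidx p) Vdeg (Vform p) s"
    and dS: "Vdelta p \<in> s"
    and invE: "invariant (Vidx p) s (Espace p)" and invF: "invariant (Vidx p) s (Fspace p)"
begin

abbreviation "V \<equiv> Vidx p"
abbreviation "D \<equiv> Vdelta p"

lemma lie: "lie_sub V s" using graded_parts(1)[OF g] .
lemma s_sp: "Y \<in> s \<Longrightarrow> Y \<in> sp_set V (Vform p)" using graded_parts(2)[OF g] by blast
lemma s_mat: "Y \<in> s \<Longrightarrow> mat_on V Y" using s_sp sp_mat_on by blast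
lemma s_nomix: "Y \<in> s \<Longrightarrow> nomix Y" using nomix_inv[OF invE invF] s_mat by blast

lemma nomixD: "nomix Y \<Longrightarrow> Y b a \<noteq> 0 \<Longrightarrow> fst b = fst a"
  unfolding nomix_def by (metis prod.collapse)

lemma sminus:
  assumes As: "A \<in> s" and hA: "homog Vdeg (-1) A"
  shows "\<exists>\<alpha>. A = msc \<alpha> D"
proof -
  have mA: "mat_on V A" using s_mat[OF As] .
  have nA: "nomix A" using s_nomix[OF As] .
  have z: "brk V A D = mzero"
  proof (rule graded_homog_zero[OF g])
    show "brk V A D \<in> s" using lie_sub_brk[OF lie As dS] .
    show "homog Vdeg (-1 + -1) (brk V A D)" by (rule homog_brk[OF hA homog_Vdelta])
  qed auto
  define \<alpha> where "\<alpha> x i = A (x, i - 1) (x, i)" for x i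
  have step: "\<alpha> x (i - 1) = \<alpha> x i" if "- int p + 2 \<le> i" "i \<le> int p" for x i
  proof -
    have "brk V A D (x, i - 2) (x, i) = 0" using z by (simp add: mzero_def)
    then show ?thesis using that unfolding brk_Y_delta[OF mA] \<alpha>_def by (simp add: in_Vidx)
  qed
  have const: "\<alpha> x (int p - int k) = \<alpha> x (int p)" if "k < 2 * p" for x k
    using that
  proof (induction k)
    case 0 then show ?case by simp
  next
    case (Suc k)
    then have "\<alpha> x (int p - int k - 1) = \<alpha> x (int p - int k)" by (intro step) auto
    moreover have eq: "int p - int (Suc k) = int p - int k - 1" by simp
    ultimately show ?case unfolding eq using Suc by simp
  qed
  have const': "\<alpha> x i = \<alpha> x (int p)" if "- int p < i" "i \<le> int p" for x i
    using const[of "nat (int p - i)" x] that by simp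
  have spr: "\<alpha> True (1 - i) = \<alpha> False i" if "- int p < i" "i \<le> int p" for i
  proof -
    have m1: "(False, i) \<in> V" using that by (simp add: in_Vidx)
    have m2: "(True, 1 - i) \<in> V" using that by (simp add: in_Vidx)
    have "A (False, i - 1) (False, i) * Vform p (False, i - 1) (True, 1 - i) +
         Vform p (False, i) (True, - i) * A (True, - i) (True, 1 - i) = 0"
      using sp_entry[OF s_sp[OF As] m1 m2] by simp
    moreover have "Vform p (False, i - 1) (True, 1 - i) = - ((-1) ^ nat (int p - i))"
      using Vform_val[of "i - 1" p False] sg_step[of i p] that by simp
    moreover have "Vform p (False, i) (True, - i) = (-1) ^ nat (int p - i)"
      using Vform_val[of i p False] that by simp
    ultimately have "((-1) ^ nat (int p - i)) * (A (True, - i) (True, 1 - i) - A (False, i - 1) (False, i)) = (0::complex)"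
      by (simp add: algebra_simps)
    then show ?thesis unfolding \<alpha>_def by simp
  qed
  show ?thesis
  proof (rule exI[of _ "\<alpha> False (int p)"], unfold fun_eq_iff msc_def, intro allI)
    fix b a
    show "A b a = \<alpha> False (int p) * D b a"
    proof (cases "fst b = fst a \<and> snd b = snd a - 1 \<and> - int p < snd a \<and> snd a \<le> int p")
      case True
      obtain x i where a: "a = (x, i)" by (cases a)
      have b: "b = (x, i - 1)" using True a by (cases b) auto
      have Aba: "A b a = \<alpha> x i" unfolding \<alpha>_def a b ..
      have r1: "- int p < i" "i \<le> int p" using True a by auto
      have r2: "- int p < 1 - i" "1 - i \<le> int p" using True a by auto
      have "\<alpha> x i = \<alpha> False (int p)"
      proof (cases x)
        case False then show ?thesis using const'[OF r1, of False] by simp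
      next
        case T: True
        have "\<alpha> True i = \<alpha> False (1 - i)" using spr[OF r2] by simp
        also have "\<dots> = \<alpha> False (int p)" using const'[OF r2, of False] .
        finally show ?thesis using T by simp
      qed
      then show ?thesis using Aba True by (simp add: Vdelta_def)
    next
      case False
      have "A b a = 0"
      proof (rule ccontr)
        assume nz: "A b a \<noteq> 0"
        have "fst b = fst a" using nomixD[OF nA nz] .
        moreover have "snd b = snd a - 1" using homog_V_int[of "-1" A b a] hA nz by simp
        moreover have "a \<in> V" "b \<in> V" using mat_onD1[OF mA] mat_onD2[OF mA] nz by blast+
        ultimately show False using False by (simp add: in_Vidx')
      qed
      moreover have "D b a = 0" using False unfolding Vdelta_def by auto
      ultimately show ?thesis by simp
    qed
  qed
qed

lemma s0_diag:
  assumes Bs: "B \<in> s" and hB: "homog Vdeg 0 B"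
  shows "diagm B"
  unfolding diagm_def
proof (intro allI impI)
  fix a b assume nz: "B b a \<noteq> 0"
  have "fst b = fst a" using nomixD[OF s_nomix[OF Bs] nz] .
  moreover have "snd b = snd a" using homog_V[OF hB nz] by simp
  ultimately show "b = a" by (simp add: prod_eq_iff)
qed

lemma diagm_homog0: "diagm B \<Longrightarrow> homog deg 0 B"
  by (auto simp: diagm_def homog_def)

lemma s1_exists: "\<exists>C\<in>s. homog Vdeg 1 C \<and> C \<noteq> mzero"
proof (rule ccontr)
  assume no: "\<not> ?thesis"
  show False
  proof (rule lemmaB[OF graded_parts(3)[OF g] dS _ _ finite_Vidx])
    fix Y assume Ys: "Y \<in> s"
    obtain A B C where ABC: "A \<in> s" "B \<in> s" "C \<in> s" "homog Vdeg (-1) A" "homog Vdeg 0 B" "homog Vdeg 1 C"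
      "Y = madd A (madd B C)" using graded_parts(4)[OF g Ys] by blast
    have "C = mzero" using no ABC by blast
    moreover obtain \<alpha> where "A = msc \<alpha> D" using sminus ABC by blast
    ultimately have "Y = madd (msc \<alpha> D) B" using ABC by simp
    then show "\<exists>\<alpha> B. B \<in> s \<and> diagm B \<and> Y = madd (msc \<alpha> D) B"
      using ABC s0_diag by blast
  next
    fix B assume Bs: "B \<in> s" and dB: "diagm B"
    have "brk V D B \<in> s" using lie_sub_brk[OF lie dS Bs] .
    moreover have "homog Vdeg (-1 + 0) (brk V D B)"
      by (rule homog_brk[OF homog_Vdelta diagm_homog0[OF dB]])
    ultimately show "\<exists>c. brk V D B = msc c D" using sminus by simp
  qed
qed

lemma s1_struct:
  assumes Cs: "C \<in> s" and hC: "homog Vdeg 1 C"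
  shows "\<exists>\<kappa>. C = msc (- \<kappa> / 2) (Eop p)"
proof -
  have mC: "mat_on V C" using s_mat[OF Cs] .
  have nC: "nomix C" using s_nomix[OF Cs] .
  define B0 where "B0 = brk V C D"
  have B0s: "B0 \<in> s" unfolding B0_def using lie_sub_brk[OF lie Cs dS] .
  have hB0: "homog Vdeg (1 + -1) B0" unfolding B0_def by (rule homog_brk[OF hC homog_Vdelta])
  have mB0: "mat_on V B0" using s_mat[OF B0s] .
  have "brk V B0 D \<in> s" using lie_sub_brk[OF lie B0s dS] .
  moreover have "homog Vdeg (0 + -1) (brk V B0 D)" by (rule homog_brk[OF _ homog_Vdelta]) (use hB0 in simp)
  ultimately obtain \<kappa> where kap: "brk V B0 D = msc \<kappa> D" using sminus by auto
  define gg where "gg x i = C (x, i + 1) (x, i)" for x i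
  define \<beta> where "\<beta> x i = B0 (x, i) (x, i)" for x i
  have \<beta>g: "\<beta> x i = gg x (i - 1) - gg x i" if "- int p \<le> i" "i \<le> int p" for x i
    unfolding \<beta>_def gg_def B0_def brk_Y_delta[OF mC] using that by (simp add: in_Vidx)
  have \<beta>k: "\<beta> x (i - 1) - \<beta> x i = \<kappa>" if "- int p < i" "i \<le> int p" for x i
  proof -
    have "brk V B0 D (x, i - 1) (x, i) = \<kappa>" using kap that by (simp add: msc_def Vdelta_def)
    then show ?thesis unfolding brk_Y_delta[OF mB0] \<beta>_def using that by (simp add: in_Vidx)
  qed
  have g0: "gg x (- int p - 1) = 0" for x
    unfolding gg_def by (rule mat_onD2[OF mC]) (simp add: in_Vidx)
  have gp: "gg x (int p) = 0" for x
    unfolding gg_def by (rule mat_onD1[OF mC]) (simp add: in_Vidx)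
  have I1: "\<beta> x (- int p + int k) = \<beta> x (- int p) - \<kappa> * of_nat k" if "k \<le> 2 * p" for x k
    using that
  proof (induction k)
    case 0 then show ?case by simp
  next
    case (Suc k)
    have "\<beta> x (- int p + int (Suc k) - 1) - \<beta> x (- int p + int (Suc k)) = \<kappa>"
      by (rule \<beta>k) (use Suc.prems in auto)
    moreover have "- int p + int (Suc k) - 1 = - int p + int k" by simp
    ultimately show ?case using Suc by (simp add: algebra_simps)
  qed
  have I2: "gg x (- int p - 1 + int k) = - of_nat k * \<beta> x (- int p) + \<kappa> * of_nat k * (of_nat k - 1) / 2"
    if "k \<le> 2 * p + 1" for x k
    using that
  proof (induction k)
    case 0 then show ?case using g0 by simp
  next
    case (Suc k)
    have e1: "- int p - 1 + int (Suc k) = - int p + int k" by simp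
    have "\<beta> x (- int p + int k) = gg x (- int p + int k - 1) - gg x (- int p + int k)"
      by (rule \<beta>g) (use Suc.prems in auto)
    moreover have "gg x (- int p + int k - 1) = gg x (- int p - 1 + int k)" by (rule arg_cong[where f="gg x"]) simp
    ultimately have "gg x (- int p + int k) = gg x (- int p - 1 + int k) - \<beta> x (- int p + int k)" by simp
    also have "\<dots> = - of_nat k * \<beta> x (- int p) + \<kappa> * of_nat k * (of_nat k - 1) / 2
                      - (\<beta> x (- int p) - \<kappa> * of_nat k)"
      using Suc I1[of k x] by simp
    also have "\<dots> = - of_nat (Suc k) * \<beta> x (- int p) + \<kappa> * of_nat (Suc k) * (of_nat (Suc k) - 1) / 2"
      by (simp add: field_simps)
    finally show ?case unfolding e1 .
  qed
  have b0: "\<beta> x (- int p) = \<kappa> * of_nat p" for x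
  proof -
    have "gg x (- int p - 1 + int (2 * p + 1)) = 0" using gp by simp
    then have "- of_nat (2*p+1) * \<beta> x (- int p) + \<kappa> * of_nat (2*p+1) * (of_nat (2*p+1) - 1) / 2 = 0"
      using I2[of "2*p+1" x] by simp
    moreover have "of_nat (2*p+1) * (\<kappa> * of_nat p - \<beta> x (- int p)) =
       - of_nat (2*p+1) * \<beta> x (- int p) + \<kappa> * of_nat (2*p+1) * (of_nat (2*p+1) - 1) / (2::complex)"
      by (simp add: field_simps)
    ultimately have e: "of_nat (2*p+1) * (\<kappa> * of_nat p - \<beta> x (- int p)) = 0" by simp
    have nz: "(of_nat (2*p+1)::complex) \<noteq> 0" by (simp only: of_nat_eq_0_iff)
    have "\<kappa> * of_nat p - \<beta> x (- int p) = 0" using e nz by (metis mult_eq_0_iff)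
    then show ?thesis by simp
  qed
  have gform: "gg x i = - \<kappa> / 2 * of_int ((int p - i) * (int p + i + 1))"
    if "- int p \<le> i" "i < int p" for x i
  proof -
    define k where "k = nat (i + int p + 1)"
    have ik: "i = - int p - 1 + int k" "k \<le> 2 * p + 1" using that unfolding k_def by auto
    have "gg x i = - of_nat k * (\<kappa> * of_nat p) + \<kappa> * of_nat k * (of_nat k - 1) / 2"
      using I2[OF ik(2), of x] b0 ik(1) by simp
    moreover have "(of_nat k :: complex) = of_int (i + int p + 1)" unfolding k_def using that by simp
    ultimately show ?thesis by (simp add: field_simps)
  qed
  show ?thesis
  proof (rule exI[of _ \<kappa>], unfold fun_eq_iff msc_def, intro allI)
    fix b a
    show "C b a = - \<kappa> / 2 * Eop p b a"
    proof (cases "fst b = fst a \<and> snd b = snd a + 1 \<and> - int p \<le> snd a \<and> snd a < int p")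
      case True
      obtain x i where a: "a = (x, i)" by (cases a)
      have b: "b = (x, i + 1)" using True a by (cases b) auto
      have "C b a = gg x i" unfolding gg_def a b ..
      also have "\<dots> = - \<kappa> / 2 * of_int ((int p - i) * (int p + i + 1))"
        using gform True a by simp
      finally show ?thesis using True a by (simp add: Eop_def)
    next
      case False
      have "C b a = 0"
      proof (rule ccontr)
        assume nz: "C b a \<noteq> 0"
        have "fst b = fst a" using nomixD[OF nC nz] .
        moreover have "snd b = snd a + 1" using homog_V[OF hC nz] by linarith
        moreover have "a \<in> V" "b \<in> V" using mat_onD1[OF mC] mat_onD2[OF mC] nz by blast+
        ultimately show False using False by (simp add: in_Vidx')
      qed
      moreover have "Eop p b a = 0" using False unfolding Eop_def by auto
      ultimately show ?thesis by simp
    qed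
  qed
qed

end

lemma mat_on_Eop: "mat_on (Vidx p) (Eop p)"
  by (auto simp: mat_on_def Eop_def in_Vidx')

lemma homog_Eop: "homog Vdeg 1 (Eop p)"
  by (auto simp: homog_def Eop_def Vdeg_def)

definition Hm :: "nat \<Rightarrow> bool \<times> int \<Rightarrow> bool \<times> int \<Rightarrow> complex" where
  "Hm p b a = (if b = a \<and> a \<in> Vidx p then of_int (2 * snd a) else 0)"

definition eo :: "nat \<Rightarrow> int \<Rightarrow> int" where
  "eo p i = (if - int p \<le> i \<and> i < int p then (int p - i) * (int p + i + 1) else 0)"

lemma Eop_eo: "Eop p b a = (if fst b = fst a \<and> snd b = snd a + 1 then of_int (eo p (snd a)) else 0)"
  by (simp add: Eop_def eo_def)

lemma eo_diff: "- int p \<le> i \<Longrightarrow> i \<le> int p \<Longrightarrow> eo p (i - 1) - eo p i = 2 * i"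
  unfolding eo_def
  by (cases "i = - int p"; cases "i = int p") (auto simp: algebra_simps)

lemma brk_Eop_delta: "brk (Vidx p) (Eop p) (Vdelta p) = Hm p"
  unfolding fun_eq_iff
proof (intro allI)
  fix b a :: "bool \<times> int"
  obtain x i y j where a: "a = (x, i)" and b: "b = (y, j)" by (cases a; cases b)
  show "brk (Vidx p) (Eop p) (Vdelta p) b a = Hm p b a"
  proof (cases "b = a \<and> a \<in> Vidx p")
    case True
    then have "brk (Vidx p) (Eop p) (Vdelta p) b a = of_int (eo p (i - 1) - eo p i)"
      unfolding brk_Y_delta[OF mat_on_Eop] Eop_eo using a b by simp
    also have "\<dots> = of_int (2 * i)" using eo_diff[of p i] True a by (simp add: in_Vidx)
    finally show ?thesis using True a by (simp add: Hm_def)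
  next
    case False
    then show ?thesis unfolding brk_Y_delta[OF mat_on_Eop] Eop_eo using a b
      by (auto simp: Hm_def)
  qed
qed

lemma Hm_diag: "diagm (Hm p)"
  by (simp add: diagm_def Hm_def)

lemma Hm_prop:
  assumes "mat_on (Vidx p) Z" "homog Vdeg k Z"
  shows "brk (Vidx p) (Hm p) Z = msc (complex_of_real (2*k)) Z"
  by (rule H_prop[OF finite_Vidx Hm_diag _ assms], simp add: Hm_def Vdeg_def)

lemma V_nil:
  assumes "k > real (2 * p)" "mat_on (Vidx p) Z" "homog Vdeg k Z"
  shows "Z = mzero"
  unfolding fun_eq_iff mzero_def
proof (intro allI, rule ccontr)
  fix b a assume nz: "Z b a \<noteq> 0"
  have "a \<in> Vidx p" "b \<in> Vidx p" using mat_onD1[OF assms(2)] mat_onD2[OF assms(2)] nz by blast+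
  moreover have "real_of_int (snd b) = real_of_int (snd a) + k" using homog_V[OF assms(3) nz] .
  ultimately show False using assms(1) by (simp add: in_Vidx')
qed

lemma V_intd: "Vdeg b - Vdeg a \<in> \<int>"
  by (simp add: Vdeg_def)

lemma homog_neg_nonneg:
  assumes "homog deg k X" "k < 0" "nonneg deg X"
  shows "X = mzero"
  using assms by (force simp: homog_def nonneg_def mzero_def fun_eq_iff)

context pcase begin

lemma Eop_s: "Eop p \<in> s"
proof -
  obtain C where C: "C \<in> s" "homog Vdeg 1 C" "C \<noteq> mzero" using s1_exists by blast
  obtain \<kappa> where k: "C = msc (- \<kappa> / 2) (Eop p)" using s1_struct[OF C(1,2)] by blast
  have "\<kappa> \<noteq> 0" using C(3) k by (auto simp: msc_def mzero_def fun_eq_iff)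
  then have "Eop p = msc (- 2 / \<kappa>) C" using k by (simp add: msc_def fun_eq_iff)
  then show ?thesis using lie_sub_msc[OF lie C(1)] by simp
qed

definition fam where
  "fam M \<longleftrightarrow> msubspace V M \<and> M \<subseteq> sp_set V (Vform p) \<inter> {X. nonneg Vdeg X} \<and>
       (\<forall>Y\<in>s. \<forall>X\<in>M. brk V Y X \<in> M)"

lemma lmax_fam: "lmax V Vdeg (Vform p) s = \<Union>{M. fam M}"
  by (simp add: lmax_def fam_def)

lemma fam_homog0:
  assumes "fam M" "X \<in> M"
  shows "homog Vdeg 0 X"
proof (rule lemmaA[OF finite_Vidx mat_on_Vdelta mat_on_Eop homog_Vdelta homog_Eop brk_Eop_delta Hm_prop V_nil])
  show "\<And>a b. a \<in> V \<Longrightarrow> b \<in> V \<Longrightarrow> Vdeg b - Vdeg a \<in> \<int>" by (rule V_intd)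
  show "\<And>X. X \<in> M \<Longrightarrow> mat_on V X \<and> nonneg Vdeg X \<and> brk V D X \<in> M \<and> brk V (Eop p) X \<in> M"
    using assms(1) dS Eop_s unfolding fam_def by (auto simp: sp_set_def)
  show "X \<in> M" by fact
qed simp_all

end

definition bidx :: "bool \<Rightarrow> nat" where "bidx x = (if x then 1 else 0)"

definition phi :: "nat \<Rightarrow> (nat \<Rightarrow> nat \<Rightarrow> complex) \<Rightarrow> bool \<times> int \<Rightarrow> bool \<times> int \<Rightarrow> complex" where
  "phi p A = (\<lambda>b a. if a \<in> Vidx p \<and> snd b = snd a then A (bidx (fst b)) (bidx (fst a)) else 0)"

lemma mat_on_phi: "mat_on (Vidx p) (phi p A)"
  by (auto simp: mat_on_def phi_def in_Vidx')

lemma homog_phi: "homog Vdeg 0 (phi p A)"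
  by (auto simp: homog_def phi_def Vdeg_def)

lemma nonneg_phi: "nonneg Vdeg (phi p A)"
  by (auto simp: nonneg_def phi_def Vdeg_def)

lemma phi_madd: "phi p (madd A B) = madd (phi p A) (phi p B)"
  by (auto simp: phi_def madd_def fun_eq_iff)

lemma phi_msc: "phi p (msc c A) = msc c (phi p A)"
  by (auto simp: phi_def msc_def fun_eq_iff)

lemma phi_mzero: "phi p mzero = mzero"
  by (auto simp: phi_def mzero_def fun_eq_iff)

lemma sum_two:
  assumes "(False, j) \<in> Vidx p" "(True, j) \<in> Vidx p"
    "\<And>c. c \<in> Vidx p \<Longrightarrow> snd c \<noteq> j \<Longrightarrow> f c = 0"
  shows "(\<Sum>c\<in>Vidx p. f c) = f (False, j) + f (True, j)"
proof -
  have "(\<Sum>c\<in>Vidx p. f c) = (\<Sum>c\<in>{(False, j), (True, j)}. f c)"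
  proof (rule sum.mono_neutral_right[OF finite_Vidx])
    show "{(False, j), (True, j)} \<subseteq> Vidx p" using assms by auto
    show "\<forall>i\<in>Vidx p - {(False, j), (True, j)}. f i = 0"
    proof
      fix c assume c: "c \<in> Vidx p - {(False, j), (True, j)}"
      then have "snd c \<noteq> j" by (cases c) (metis (full_types) DiffD2 insertCI prod.collapse)
      then show "f c = 0" using assms(3) c by blast
    qed
  qed
  also have "\<dots> = f (False, j) + f (True, j)" by simp
  finally show ?thesis .
qed

lemma bidx_simps[simp]: "bidx True = 1" "bidx False = 0"
  by (simp_all add: bidx_def)

lemma phi_brk: "brk (Vidx p) (phi p A) (phi p B) = phi p (brk {0,1} A B)"
  unfolding fun_eq_iff
proof (intro allI)
  fix b a :: "bool \<times> int"
  have mm: "mmul (Vidx p) (phi p A) (phi p B) b a = phi p (mmul {0,1} A B) b a" for A B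
  proof (cases "a \<in> Vidx p \<and> snd b = snd a")
    case True
    have "mmul (Vidx p) (phi p A) (phi p B) b a =
        phi p A b (False, snd a) * phi p B (False, snd a) a + phi p A b (True, snd a) * phi p B (True, snd a) a"
      unfolding mmul_def by (rule sum_two) (use True in \<open>auto simp: in_Vidx' phi_def\<close>)
    then show ?thesis using True unfolding mmul01 by (simp add: phi_def in_Vidx')
  next
    case False
    have "mmul (Vidx p) (phi p A) (phi p B) b a = 0"
      unfolding mmul_def by (rule sum.neutral) (use False in \<open>auto simp: phi_def\<close>)
    then show ?thesis using False by (auto simp: phi_def)
  qed
  show "brk (Vidx p) (phi p A) (phi p B) b a = phi p (brk {0,1} A B) b a"
    unfolding brk_def mm by (simp add: phi_def)
qed

lemma phi_inj:
  assumes "mat_on {0,1} A" "mat_on {0,1} B" "phi p A = phi p B"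
  shows "A = B"
  unfolding fun_eq_iff
proof (intro allI)
  fix i j :: nat
  show "A i j = B i j"
  proof (cases "i \<le> 1 \<and> j \<le> 1")
    case True
    have "phi p A (i = 1, - int p) (j = 1, - int p) = phi p B (i = 1, - int p) (j = 1, - int p)"
      using assms(3) by simp
    then show ?thesis using True by (auto simp: phi_def in_Vidx bidx_def le_Suc_eq)
  next
    case False
    then show ?thesis using assms(1,2) unfolding mat_on_def by auto
  qed
qed

lemma sp_sums:
  assumes a: "a \<in> Vidx p" and b: "b \<in> Vidx p"
  shows "(\<Sum>c\<in>Vidx p. X c a * Vform p c b) + (\<Sum>c\<in>Vidx p. Vform p a c * X c b) =
         X (\<not> fst b, - snd b) a * Vform p (\<not> fst b, - snd b) b +
         Vform p a (\<not> fst a, - snd a) * X (\<not> fst a, - snd a) b"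
proof -
  have bV: "(\<not> fst b, - snd b) \<in> Vidx p" using b by (cases b) (auto simp: in_Vidx)
  have aV: "(\<not> fst a, - snd a) \<in> Vidx p" using a by (cases a) (auto simp: in_Vidx)
  have s1: "(\<Sum>c\<in>Vidx p. X c a * Vform p c b) = X (\<not> fst b, - snd b) a * Vform p (\<not> fst b, - snd b) b"
  proof -
    have "Vform p c b = 0" if "c \<noteq> (\<not> fst b, - snd b)" for c using Vform_nz that by blast
    then show ?thesis using sum_single[OF finite_Vidx, where z="(\<not> fst b, - snd b)" and f="\<lambda>c. X c a * Vform p c b"] bV
      by simp
  qed
  have s2: "(\<Sum>c\<in>Vidx p. Vform p a c * X c b) = Vform p a (\<not> fst a, - snd a) * X (\<not> fst a, - snd a) b"
  proof -
    have "Vform p a c = 0" if "c \<noteq> (\<not> fst a, - snd a)" for c using Vform_nz Vform_anti that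
      by (metis neg_equal_0_iff_equal)
    then show ?thesis using sum_single[OF finite_Vidx, where z="(\<not> fst a, - snd a)" and f="\<lambda>c. Vform p a c * X c b"] aV
      by simp
  qed
  show ?thesis using s1 s2 by simp
qed

lemma phi_sp:
  assumes A: "A \<in> sl2_set"
  shows "phi p A \<in> sp_set (Vidx p) (Vform p)"
  unfolding sp_set_def
proof (intro CollectI conjI ballI mat_on_phi)
  fix a b assume a: "a \<in> Vidx p" and b: "b \<in> Vidx p"
  obtain x i y j where ab: "a = (x, i)" "b = (y, j)" by (cases a; cases b)
  have tr: "A 0 0 + A 1 1 = 0" using A by (simp add: sl2_set_def)
  have tr2: "A (Suc 0) (Suc 0) = - A 0 0" "A 1 1 = - A 0 0" using tr by (simp_all add: eq_neg_iff_add_eq_0 add.commute)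
  have ir: "\<bar>i\<bar> \<le> int p" using a ab by (simp add: in_Vidx abs_le_iff)
  have "phi p A (\<not> fst b, - snd b) a * Vform p (\<not> fst b, - snd b) b +
         Vform p a (\<not> fst a, - snd a) * phi p A (\<not> fst a, - snd a) b = 0"
  proof (cases "j = - i")
    case False
    then show ?thesis using ab by (auto simp: phi_def)
  next
    case True
    have v1: "Vform p (\<not> y, i) (y, - i) = (if \<not> y then - ((-1) ^ nat (int p - i)) else (-1) ^ nat (int p - i))"
      using Vform_val[OF ir, of "\<not> y"] by simp
    have v2: "Vform p (x, i) (\<not> x, - i) = (if x then - ((-1) ^ nat (int p - i)) else (-1) ^ nat (int p - i))"
      using Vform_val[OF ir, of x] by simp
    show ?thesis using True ab a b v1 v2
      by (cases x; cases y) (auto simp: phi_def algebra_simps bidx_def tr2)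
  qed
  then show "(\<Sum>c\<in>Vidx p. phi p A c a * Vform p c b) + (\<Sum>c\<in>Vidx p. Vform p a c * phi p A c b) = 0"
    using sp_sums[OF a b] by simp
qed

lemma brk_block_phi:
  assumes Dm: "\<And>b a. D' b a = (if fst b = fst a then d (snd b) (snd a) else 0)"
    and dz: "\<And>j i. d j i \<noteq> 0 \<Longrightarrow> - int p \<le> i \<and> i \<le> int p \<and> - int p \<le> j \<and> j \<le> int p"
  shows "brk (Vidx p) D' (phi p A) = mzero"
  unfolding fun_eq_iff
proof (intro allI)
  fix b a :: "bool \<times> int"
  have m1: "mmul (Vidx p) D' (phi p A) b a =
      (if (fst b, snd a) \<in> Vidx p then D' b (fst b, snd a) * phi p A (fst b, snd a) a else 0)"
    unfolding mmul_def by (rule sum_single[OF finite_Vidx]) (auto simp: Dm phi_def)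
  have m2: "mmul (Vidx p) (phi p A) D' b a =
      (if (fst a, snd b) \<in> Vidx p then phi p A b (fst a, snd b) * D' (fst a, snd b) a else 0)"
    unfolding mmul_def by (rule sum_single[OF finite_Vidx]) (auto simp: Dm phi_def)
  show "brk (Vidx p) D' (phi p A) b a = mzero b a"
  proof (cases "d (snd b) (snd a) = 0")
    case True
    then show ?thesis unfolding brk_def m1 m2 by (simp add: Dm mzero_def phi_def)
  next
    case False
    then have r: "- int p \<le> snd a \<and> snd a \<le> int p \<and> - int p \<le> snd b \<and> snd b \<le> int p" using dz by blast
    then show ?thesis unfolding brk_def m1 m2 by (simp add: Dm mzero_def phi_def in_Vidx')
  qed
qed

lemma brk_delta_phi: "brk (Vidx p) (Vdelta p) (phi p A) = mzero"
  by (rule brk_block_phi[where d="\<lambda>j i. if j = i - 1 \<and> - int p < i \<and> i \<le> int p then 1 else 0"])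
     (auto simp: Vdelta_def split: if_splits)

lemma brk_Eop_phi: "brk (Vidx p) (Eop p) (phi p A) = mzero"
  by (rule brk_block_phi[where d="\<lambda>j i. if j = i + 1 then of_int (eo p i) else 0"])
     (auto simp: Eop_eo eo_def split: if_splits)

definition Mx :: "nat \<Rightarrow> (bool \<times> int \<Rightarrow> bool \<times> int \<Rightarrow> complex) \<Rightarrow> nat \<Rightarrow> nat \<Rightarrow> complex" where
  "Mx p X = (\<lambda>i j. if i \<le> 1 \<and> j \<le> 1 then X (i = 1, - int p) (j = 1, - int p) else 0)"

lemma phi_char:
  assumes mX: "mat_on (Vidx p) X" and hX: "homog Vdeg 0 X" and dX: "brk (Vidx p) (Vdelta p) X = mzero"
  shows "X = phi p (Mx p X)"
proof -
  have st: "X (y, i) (x, i) = X (y, i - 1) (x, i - 1)" if "- int p < i" "i \<le> int p" for x y i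
  proof -
    have "brk (Vidx p) (Vdelta p) X (y, i - 1) (x, i) = 0" using dX by (simp add: mzero_def)
    then show ?thesis unfolding brk_delta_Y[OF mX] using that by (simp add: in_Vidx)
  qed
  have cst: "X (y, - int p + int k) (x, - int p + int k) = X (y, - int p) (x, - int p)" if "k \<le> 2 * p" for x y k
    using that
  proof (induction k)
    case 0 then show ?case by simp
  next
    case (Suc k)
    have "X (y, - int p + int (Suc k)) (x, - int p + int (Suc k)) =
          X (y, - int p + int (Suc k) - 1) (x, - int p + int (Suc k) - 1)"
      by (rule st) (use Suc.prems in auto)
    moreover have "- int p + int (Suc k) - 1 = - int p + int k" by simp
    ultimately show ?case using Suc by simp
  qed
  have cst': "X (y, i) (x, i) = X (y, - int p) (x, - int p)" if "- int p \<le> i" "i \<le> int p" for x y i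
    using cst[of "nat (i + int p)" y x] that by simp
  show ?thesis unfolding fun_eq_iff
  proof (intro allI)
    fix b a :: "bool \<times> int"
    obtain x i y j where ab: "a = (x, i)" "b = (y, j)" by (cases a; cases b)
    show "X b a = phi p (Mx p X) b a"
    proof (cases "a \<in> Vidx p \<and> snd b = snd a")
      case True
      then have "j = i" "- int p \<le> i" "i \<le> int p" using ab by (auto simp: in_Vidx)
      then show ?thesis using cst'[of i y x] ab by (cases x; cases y) (auto simp: phi_def Mx_def bidx_def in_Vidx)
    next
      case False
      have "X b a = 0"
      proof (rule ccontr)
        assume nz: "X b a \<noteq> 0"
        then have "snd b = snd a" using homog_V[OF hX nz] by simp
        moreover have "a \<in> Vidx p" using mat_onD2[OF mX] nz by blast
        ultimately show False using False by simp
      qed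
      then show ?thesis using False by (auto simp: phi_def)
    qed
  qed
qed

lemma Mx_sl2: "Mx p X 0 0 + Mx p X 1 1 = 0 \<Longrightarrow> Mx p X \<in> sl2_set"
  by (auto simp: sl2_set_def mat_on_def Mx_def)

lemma diagm_brk_diag:
  assumes fin: "finite I" and d: "diagm B"
  shows "brk I B X a a = 0"
proof -
  have s1: "(\<Sum>c\<in>I. B a c * X c a) = (if a \<in> I then B a a * X a a else 0)"
    by (rule sum_single[OF fin]) (use d in \<open>auto simp: diagm_def\<close>)
  have s2: "(\<Sum>c\<in>I. X a c * B c a) = (if a \<in> I then X a a * B a a else 0)"
    by (rule sum_single[OF fin]) (use d in \<open>auto simp: diagm_def\<close>)
  show ?thesis unfolding brk_def mmul_def s1 s2 by simp
qed

lemma Vform_corner: "Vform p (False, - int p) (True, int p) = 1"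
proof -
  have "nat (2 * int p) = 2 * p" by simp
  then show ?thesis by (simp add: Vform_def in_Vidx power_mult)
qed

context pcase begin

definition Cset where "Cset = phi p ` sl2_set"

lemma Cset_msub: "msubspace V Cset"
  unfolding msubspace_def Cset_def
proof (intro conjI ballI allI)
  show "phi p ` sl2_set \<subseteq> {X. mat_on V X}" using mat_on_phi by blast
  show "mzero \<in> phi p ` sl2_set"
    using phi_mzero sl2_closed(4)[OF sl2_elems(1) sl2_elems(1)] by (metis image_eqI)
  fix X Y assume "X \<in> phi p ` sl2_set" "Y \<in> phi p ` sl2_set"
  then obtain A B where AB: "A \<in> sl2_set" "B \<in> sl2_set" "X = phi p A" "Y = phi p B" by blast
  show "madd X Y \<in> phi p ` sl2_set" using AB sl2_closed(1)[OF AB(1,2)] phi_madd by (metis image_eqI)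
next
  fix c X assume "X \<in> phi p ` sl2_set"
  then obtain A where A: "A \<in> sl2_set" "X = phi p A" by blast
  show "msc c X \<in> phi p ` sl2_set" using A sl2_closed(2)[OF A(1) A(1)] phi_msc by (metis image_eqI)
qed

lemma s_dec:
  assumes Ys: "Y \<in> s"
  obtains \<alpha> B \<kappa> where "B \<in> s" "homog Vdeg 0 B"
    "Y = madd (msc \<alpha> D) (madd B (msc (- \<kappa> / 2) (Eop p)))"
proof -
  obtain A B C where ABC: "A \<in> s" "B \<in> s" "C \<in> s" "homog Vdeg (-1) A" "homog Vdeg 0 B" "homog Vdeg 1 C"
    "Y = madd A (madd B C)" using graded_parts(4)[OF g Ys] by blast
  obtain \<alpha> where "A = msc \<alpha> D" using sminus ABC by blast
  moreover obtain \<kappa> where "C = msc (- \<kappa> / 2) (Eop p)" using s1_struct ABC by blast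
  ultimately show ?thesis using that ABC by blast
qed

lemma Cset_inv:
  assumes Ys: "Y \<in> s" and A: "A \<in> sl2_set"
  shows "brk V Y (phi p A) \<in> Cset"
proof -
  obtain \<alpha> B \<kappa> where B: "B \<in> s" "homog Vdeg 0 B"
    and Y: "Y = madd (msc \<alpha> D) (madd B (msc (- \<kappa> / 2) (Eop p)))" using s_dec[OF Ys] by blast
  let ?X = "phi p A"
  define Z where "Z = brk V B ?X"
  have eq: "brk V Y ?X = Z"
    unfolding Y Z_def brk_madd_left brk_msc_left brk_delta_phi brk_Eop_phi by simp
  have mZ: "mat_on V Z" unfolding Z_def by (rule mat_on_brk[OF s_mat[OF B(1)] mat_on_phi])
  have hZ: "homog Vdeg (0 + 0) Z" unfolding Z_def by (rule homog_brk[OF B(2) homog_phi])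
  obtain c where c: "brk V D B = msc c D"
  proof -
    have "brk V D B \<in> s" using lie_sub_brk[OF lie dS B(1)] .
    moreover have "homog Vdeg (-1 + 0) (brk V D B)" by (rule homog_brk[OF homog_Vdelta B(2)])
    ultimately show ?thesis using sminus that by auto
  qed
  have dZ: "brk V D Z = mzero"
    unfolding Z_def jacobi[OF finite_Vidx] c brk_msc_left brk_delta_phi by simp
  have Zc: "Z = phi p (Mx p Z)" by (rule phi_char[OF mZ _ dZ]) (use hZ in simp)
  have dgB: "diagm B" using s0_diag[OF B] .
  have "Mx p Z 0 0 = 0" "Mx p Z 1 1 = 0"
    unfolding Mx_def Z_def using diagm_brk_diag[OF finite_Vidx dgB] by simp_all
  then have "Mx p Z \<in> sl2_set" using Mx_sl2 by simp
  then show ?thesis using eq Zc unfolding Cset_def by (metis image_eqI)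
qed

lemma Cset_fam: "fam Cset"
  unfolding fam_def
proof (intro conjI Cset_msub ballI subsetI)
  fix X assume "X \<in> Cset"
  then obtain A where A: "A \<in> sl2_set" "X = phi p A" unfolding Cset_def by blast
  show "X \<in> sp_set V (Vform p) \<inter> {X. nonneg Vdeg X}" using A phi_sp nonneg_phi by auto
next
  fix Y X assume Ys: "Y \<in> s" and "X \<in> Cset"
  then obtain A where A: "A \<in> sl2_set" "X = phi p A" unfolding Cset_def by blast
  show "brk V Y X \<in> Cset" using Cset_inv[OF Ys A(1)] A(2) by simp
qed

lemma fam_sub:
  assumes M: "fam M" and XM: "X \<in> M"
  shows "X \<in> Cset"
proof -
  have hX: "homog Vdeg 0 X" by (rule fam_homog0[OF M XM])
  have Xsp: "X \<in> sp_set V (Vform p)" using M XM unfolding fam_def by auto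
  have mX: "mat_on V X" using sp_mat_on[OF Xsp] .
  have dM: "brk V D X \<in> M" using M XM dS unfolding fam_def by auto
  have "nonneg Vdeg (brk V D X)" using M dM unfolding fam_def by auto
  moreover have "homog Vdeg (-1 + 0) (brk V D X)" by (rule homog_brk[OF homog_Vdelta hX])
  ultimately have dX: "brk V D X = mzero" using homog_neg_nonneg by force
  have Xc: "X = phi p (Mx p X)" by (rule phi_char[OF mX hX dX])
  have m1: "(False, - int p) \<in> V" and m2: "(True, int p) \<in> V" by (simp_all add: in_Vidx)
  have "X (False, - int p) (False, - int p) * Vform p (False, - int p) (True, int p) +
        Vform p (False, - int p) (True, int p) * X (True, int p) (True, int p) = 0"
    using sp_entry[OF Xsp m1 m2] by simp
  then have "phi p (Mx p X) (False, - int p) (False, - int p) + phi p (Mx p X) (True, int p) (True, int p) = 0"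
    using Xc Vform_corner by simp
  then have "Mx p X 0 0 + Mx p X 1 1 = 0" by (simp add: phi_def in_Vidx)
  then have "Mx p X \<in> sl2_set" by (rule Mx_sl2)
  then show ?thesis using Xc unfolding Cset_def by (metis image_eqI)
qed

lemma lmax_Cset: "lmax V Vdeg (Vform p) s = Cset"
  unfolding lmax_fam using fam_sub Cset_fam by blast

lemma pcase_result: "lie_sub V (lmax V Vdeg (Vform p) s) \<and> iso_sl2 V (lmax V Vdeg (Vform p) s)"
  unfolding lmax_Cset
proof
  show "lie_sub V Cset"
    unfolding lie_sub_def
  proof (intro conjI Cset_msub ballI)
    fix X Y assume "X \<in> Cset" "Y \<in> Cset"
    then obtain A B where AB: "A \<in> sl2_set" "B \<in> sl2_set" "X = phi p A" "Y = phi p B" unfolding Cset_def by blast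
    show "brk V X Y \<in> Cset" using AB phi_brk sl2_closed(3)[OF AB(1,2)] unfolding Cset_def by (metis image_eqI)
  qed
  show "iso_sl2 V Cset"
    unfolding iso_sl2_def
  proof (intro exI[of _ "phi p"] conjI ballI allI)
    show "bij_betw (phi p) sl2_set Cset"
      unfolding bij_betw_def Cset_def inj_on_def using phi_inj by (auto simp: sl2_set_def)
    fix A B assume "A \<in> sl2_set" "B \<in> sl2_set"
    show "phi p (madd A B) = madd (phi p A) (phi p B)" by (rule phi_madd)
    show "phi p (brk {0, 1} A B) = brk V (phi p A) (phi p B)" by (rule phi_brk[symmetric])
  next
    fix c A show "phi p (msc c A) = msc c (phi p A)" by (rule phi_msc)
  qed
qed

end

locale lcase =
  fixes m :: real and S :: "real \<Rightarrow> real \<Rightarrow> complex" and \<tau> :: "real \<Rightarrow> real \<Rightarrow> complex"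
    and s :: "(real \<Rightarrow> real \<Rightarrow> complex) set"
  assumes mh: "m \<in> halfodd" and mpos: "m > 0" and Sok: "Lform_ok m S" and tok: "Ltau_ok m \<tau>"
    and g: "graded_sl2_sub (Lidx m) (\<lambda>i. i) S s" and ts: "\<tau> \<in> s"
begin

abbreviation "L \<equiv> Lidx m"

definition z :: int where "z = (SOME z. m = real_of_int z + 1/2)"
lemma mz: "m = real_of_int z + 1/2"
proof -
  have "\<exists>z. m = real_of_int z + 1/2" using mh by (auto simp: halfodd_def)
  then show ?thesis unfolding z_def by (rule someI_ex)
qed
lemma z_nonneg: "z \<ge> 0"
  using mz mpos by linarith

definition N :: nat where "N = nat (2 * z + 1)"
lemma N_eq: "real N = 2 * m"
  using mz z_nonneg by (simp add: N_def)

lemma L_char: "a \<in> L \<longleftrightarrow> (\<exists>k\<le>N. a = - m + real k)"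
proof
  assume a: "a \<in> L"
  then obtain i :: int where i: "a = real_of_int i + 1/2" and ab: "\<bar>a\<bar> \<le> m"
    by (auto simp: Lidx_def halfodd_def)
  define k where "k = nat (i + z + 1)"
  have "real_of_int i + 1/2 \<ge> - (real_of_int z + 1/2)" using ab i mz by linarith
  then have k0: "i + z + 1 \<ge> 0" by linarith
  have "real_of_int i + 1/2 \<le> real_of_int z + 1/2" using ab i mz by linarith
  then have k1: "i \<le> z" by linarith
  have "a = - m + real k" using i mz k0 unfolding k_def by simp
  moreover have "k \<le> N" using k1 k0 z_nonneg unfolding k_def N_def by simp
  ultimately show "\<exists>k\<le>N. a = - m + real k" by blast
next
  assume "\<exists>k\<le>N. a = - m + real k"
  then obtain k where k: "k \<le> N" "a = - m + real k" by blast
  have "a = real_of_int (int k - z - 1) + 1/2" using k mz by simp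
  then have "a \<in> halfodd" unfolding halfodd_def by blast
  moreover have "\<bar>a\<bar> \<le> m" using k N_eq by (simp add: abs_le_iff)
  ultimately show "a \<in> L" by (simp add: Lidx_def)
qed

lemma L_image: "L = (\<lambda>k. - m + real k) ` {0..N}"
  using L_char by auto

lemma finite_L: "finite L"
  unfolding L_image by simp

lemma L_bounds: "a \<in> L \<Longrightarrow> - m \<le> a \<and> a \<le> m"
  by (auto simp: Lidx_def abs_le_iff)

lemma L_intd: "a \<in> L \<Longrightarrow> b \<in> L \<Longrightarrow> b - a \<in> \<int>"
proof -
  assume "a \<in> L" "b \<in> L"
  then obtain k l where "a = - m + real k" "b = - m + real l" using L_char by blast
  then have "b - a = of_int (int l - int k)" by simp
  then show "b - a \<in> \<int>" by (metis Ints_of_int)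
qed

lemma L_down: "a \<in> L \<Longrightarrow> a > - m \<Longrightarrow> a - 1 \<in> L"
proof -
  assume a: "a \<in> L" "a > - m"
  then obtain k where k: "k \<le> N" "a = - m + real k" using L_char by blast
  then have "k \<ge> 1" using a(2) by (cases k) auto
  then have "a - 1 = - m + real (k - 1)" using k by (simp add: of_nat_diff)
  then show ?thesis using k L_char by (metis diff_le_self le_trans)
qed

lemma L_up: "a \<in> L \<Longrightarrow> a < m \<Longrightarrow> a + 1 \<in> L"
proof -
  assume a: "a \<in> L" "a < m"
  then obtain k where k: "k \<le> N" "a = - m + real k" using L_char by blast
  then have "k < N" using a(2) N_eq by (smt (verit) of_nat_less_iff)
  then have "a + 1 = - m + real (Suc k)" "Suc k \<le> N" using k by auto
  then show ?thesis using L_char by blast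
qed

lemma L_prev_gt: "a \<in> L \<Longrightarrow> a - 1 \<in> L \<Longrightarrow> a > - m"
  using L_bounds[of "a - 1"] by simp

lemma L_top: "k \<le> N \<Longrightarrow> m - real k \<in> L"
proof -
  assume k: "k \<le> N"
  have "m - real k = - m + real (N - k)" using k N_eq by (simp add: of_nat_diff)
  then show ?thesis using L_char by (metis diff_le_self)
qed

lemma m_in: "m \<in> L" using mh mpos by (simp add: Lidx_def)
lemma mm_in: "- m \<in> L" using L_char[of "- m"] by auto

lemma lie: "lie_sub L s" using graded_parts(1)[OF g] .
lemma s_sp: "Y \<in> s \<Longrightarrow> Y \<in> sp_set L S" using graded_parts(2)[OF g] by blast
lemma s_mat: "Y \<in> s \<Longrightarrow> mat_on L Y" using s_sp sp_mat_on by blast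

lemma mat_tau: "mat_on L \<tau>" using tok by (simp add: Ltau_ok_def)
lemma tau_nz: "\<tau> b a \<noteq> 0 \<Longrightarrow> b = a - 1" using tok by (simp add: Ltau_ok_def)
lemma tau_ne: "a \<in> L \<Longrightarrow> a > - m \<Longrightarrow> \<tau> (a - 1) a \<noteq> 0" using tok by (simp add: Ltau_ok_def)
lemma homog_tau: "homog (\<lambda>i. i) (-1) \<tau>" using tau_nz by (auto simp: homog_def)

lemma sum_tau_right: "(\<Sum>c\<in>L. X b c * \<tau> c a) = X b (a - 1) * \<tau> (a - 1) a"
proof -
  have "(\<Sum>c\<in>L. X b c * \<tau> c a) = (if a - 1 \<in> L then X b (a - 1) * \<tau> (a - 1) a else 0)"
  proof (rule sum_single[OF finite_L])
    fix c assume "c \<noteq> a - 1"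
    then have "\<tau> c a = 0" using tau_nz by blast
    then show "X b c * \<tau> c a = 0" by simp
  qed
  moreover have "a - 1 \<notin> L \<Longrightarrow> \<tau> (a - 1) a = 0" using mat_onD1[OF mat_tau] by blast
  ultimately show ?thesis by simp
qed

lemma sum_tau_left: "(\<Sum>c\<in>L. \<tau> b c * X c a) = \<tau> b (b + 1) * X (b + 1) a"
proof -
  have "(\<Sum>c\<in>L. \<tau> b c * X c a) = (if b + 1 \<in> L then \<tau> b (b + 1) * X (b + 1) a else 0)"
  proof (rule sum_single[OF finite_L])
    fix c assume "c \<noteq> b + 1"
    then have "\<tau> b c = 0" using tau_nz by force
    then show "\<tau> b c * X c a = 0" by simp
  qed
  moreover have "b + 1 \<notin> L \<Longrightarrow> \<tau> b (b + 1) = 0" using mat_onD2[OF mat_tau] by blast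
  ultimately show ?thesis by simp
qed

lemma brk_Y_tau: "brk L Y \<tau> b a = Y b (a - 1) * \<tau> (a - 1) a - \<tau> b (b + 1) * Y (b + 1) a"
  unfolding brk_def mmul_def sum_tau_right sum_tau_left ..

lemma brk_tau_Y: "brk L \<tau> Y b a = \<tau> b (b + 1) * Y (b + 1) a - Y b (a - 1) * \<tau> (a - 1) a"
  unfolding brk_def mmul_def sum_tau_right sum_tau_left ..

lemma homogL: "homog (\<lambda>i. i) k X \<Longrightarrow> X b a \<noteq> 0 \<Longrightarrow> b = a + k"
  by (simp add: homog_def)

lemma sminus:
  assumes As: "A \<in> s" and hA: "homog (\<lambda>i. i) (-1) A"
  shows "\<exists>r. A = msc r \<tau>"
proof -
  have mA: "mat_on L A" using s_mat[OF As] .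
  have z0: "brk L A \<tau> = mzero"
  proof (rule graded_homog_zero[OF g])
    show "brk L A \<tau> \<in> s" using lie_sub_brk[OF lie As ts] .
    show "homog (\<lambda>i. i) (-1 + -1) (brk L A \<tau>)" by (rule homog_brk[OF hA homog_tau])
  qed auto
  define \<alpha> where "\<alpha> a = A (a - 1) a" for a
  define t where "t a = \<tau> (a - 1) a" for a
  have eq: "\<alpha> (a - 1) * t a = t (a - 1) * \<alpha> a" if "a \<in> L" "a - 2 \<in> L" for a
  proof -
    have "brk L A \<tau> (a - 2) a = 0" using z0 by (simp add: mzero_def)
    then show ?thesis unfolding brk_Y_tau \<alpha>_def t_def by (simp add: algebra_simps)
  qed
  have tm: "t m \<noteq> 0" unfolding t_def using tau_ne[OF m_in] mpos by simp
  define r where "r = \<alpha> m / t m"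
  have ind: "\<alpha> (m - real k) = r * t (m - real k)" if "k < N" for k
    using that
  proof (induction k)
    case 0 then show ?case using tm by (simp add: r_def)
  next
    case (Suc k)
    define a where "a = m - real (Suc k)"
    have aL: "a \<in> L" "a + 1 \<in> L" "a - 1 \<in> L"
    proof -
      show "a \<in> L" unfolding a_def by (rule L_top) (use Suc.prems in simp)
      have e1: "a + 1 = m - real k" unfolding a_def by simp
      show "a + 1 \<in> L" unfolding e1 by (rule L_top) (use Suc.prems in simp)
      have e2: "a - 1 = m - real (Suc (Suc k))" unfolding a_def by simp
      show "a - 1 \<in> L" unfolding e2 by (rule L_top) (use Suc.prems in simp)
    qed
    have "\<alpha> a * t (a + 1) = t a * \<alpha> (a + 1)" using eq[of "a + 1"] aL by simp
    moreover have "a + 1 = m - real k" unfolding a_def by simp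
    ultimately have "\<alpha> a * t (a + 1) = t a * (r * t (a + 1))" using Suc by simp
    moreover have "t (a + 1) \<noteq> 0" unfolding t_def using tau_ne[OF aL(2)] L_bounds[OF aL(1)] by simp
    ultimately have "\<alpha> a = r * t a" by (simp add: algebra_simps)
    then show ?case unfolding a_def .
  qed
  have ind': "\<alpha> a = r * t a" if "a \<in> L" "a > - m" for a
  proof -
    have "\<exists>k\<le>N. a = - m + real k" using that(1) L_char[of a] by simp
    then obtain k where k: "k \<le> N" "a = - m + real k" by blast
    have ak: "a = m - real (N - k)" using k N_eq by (simp add: of_nat_diff)
    have "N - k < N" using k that(2) by (cases k) auto
    from ind[OF this] show ?thesis unfolding ak[symmetric] .
  qed
  show ?thesis
  proof (rule exI[of _ r], unfold fun_eq_iff msc_def, intro allI)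
    fix b a
    show "A b a = r * \<tau> b a"
    proof (cases "b = a - 1 \<and> a \<in> L \<and> a > - m")
      case True then show ?thesis using ind'[of a] unfolding \<alpha>_def t_def by simp
    next
      case False
      have "A b a = 0"
      proof (rule ccontr)
        assume nz: "A b a \<noteq> 0"
        have "b = a - 1" using homogL[OF hA nz] by simp
        moreover have "a \<in> L" "b \<in> L" using mat_onD1[OF mA] mat_onD2[OF mA] nz by blast+
        ultimately show False using False L_prev_gt by blast
      qed
      moreover have "\<tau> b a = 0"
      proof (rule ccontr)
        assume nz: "\<tau> b a \<noteq> 0"
        have "b = a - 1" using tau_nz[OF nz] .
        moreover have "a \<in> L" "b \<in> L" using mat_onD1[OF mat_tau] mat_onD2[OF mat_tau] nz by blast+
        ultimately show False using False L_prev_gt by blast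
      qed
      ultimately show ?thesis by simp
    qed
  qed
qed


lemma homog0_diag: "homog (\<lambda>i. i) 0 B \<Longrightarrow> diagm B"
  by (simp add: homog_def diagm_def)

lemma s1_exists: "\<exists>C\<in>s. homog (\<lambda>i. i) 1 C \<and> C \<noteq> mzero"
proof (rule ccontr)
  assume no: "\<not> ?thesis"
  show False
  proof (rule lemmaB[OF graded_parts(3)[OF g] ts _ _ finite_L])
    fix Y assume Ys: "Y \<in> s"
    obtain A B C where ABC: "A \<in> s" "B \<in> s" "C \<in> s" "homog (\<lambda>i. i) (-1) A" "homog (\<lambda>i. i) 0 B"
      "homog (\<lambda>i. i) 1 C" "Y = madd A (madd B C)" using graded_parts(4)[OF g Ys] by blast
    have "C = mzero" using no ABC by blast
    moreover obtain \<alpha> where "A = msc \<alpha> \<tau>" using sminus ABC by blast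
    ultimately have "Y = madd (msc \<alpha> \<tau>) B" using ABC by simp
    then show "\<exists>\<alpha> B. B \<in> s \<and> diagm B \<and> Y = madd (msc \<alpha> \<tau>) B"
      using ABC homog0_diag by blast
  next
    fix B assume Bs: "B \<in> s" and dB: "diagm B"
    have "brk L \<tau> B \<in> s" using lie_sub_brk[OF lie ts Bs] .
    moreover have "homog (\<lambda>i. i) (-1 + 0) (brk L \<tau> B)"
      by (rule homog_brk[OF homog_tau], use dB in \<open>auto simp: diagm_def homog_def\<close>)
    ultimately show "\<exists>c. brk L \<tau> B = msc c \<tau>" using sminus by simp
  qed
qed

lemma eh_exists:
  "\<exists>e h. e \<in> s \<and> homog (\<lambda>i. i) 1 e \<and> brk L e \<tau> = h \<and> diagm h \<and>
     (\<forall>a\<in>L. \<forall>b\<in>L. h b b - h a a = complex_of_real (2 * (b - a)))"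
proof -
  obtain C where C: "C \<in> s" "homog (\<lambda>i. i) 1 C" "C \<noteq> mzero" using s1_exists by blast
  have mC: "mat_on L C" using s_mat[OF C(1)] .
  define B0 where "B0 = brk L C \<tau>"
  have B0s: "B0 \<in> s" unfolding B0_def using lie_sub_brk[OF lie C(1) ts] .
  have hB0: "homog (\<lambda>i. i) (1 + -1) B0" unfolding B0_def by (rule homog_brk[OF C(2) homog_tau])
  have dB0: "diagm B0" using homog0_diag hB0 by simp
  have "brk L B0 \<tau> \<in> s" using lie_sub_brk[OF lie B0s ts] .
  moreover have "homog (\<lambda>i. i) (0 + -1) (brk L B0 \<tau>)"
    by (rule homog_brk[OF _ homog_tau]) (use hB0 in simp)
  ultimately obtain \<kappa> where kap: "brk L B0 \<tau> = msc \<kappa> \<tau>" using sminus by auto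
  define \<beta> where "\<beta> a = B0 a a" for a
  have \<beta>k: "\<beta> (a - 1) - \<beta> a = \<kappa>" if "a \<in> L" "a > - m" for a
  proof -
    have t0: "\<tau> (a - 1) a \<noteq> 0" using tau_ne[OF that] .
    have "brk L B0 \<tau> (a - 1) a = \<kappa> * \<tau> (a - 1) a" using kap by (simp add: msc_def)
    moreover have "brk L B0 \<tau> (a - 1) a = (\<beta> (a - 1) - \<beta> a) * \<tau> (a - 1) a"
      unfolding brk_Y_tau \<beta>_def by (simp add: algebra_simps)
    ultimately show ?thesis using t0 by simp
  qed
  have kne: "\<kappa> \<noteq> 0"
  proof
    assume k0: "\<kappa> = 0"
    define u where "u a = \<tau> a (a + 1) * C (a + 1) a" for a
    have \<beta>u: "\<beta> a = u (a - 1) - u a" for a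
      unfolding \<beta>_def B0_def brk_Y_tau u_def by (simp add: algebra_simps)
    have \<beta>c: "\<beta> (- m + real k) = \<beta> (- m)" if "k \<le> N" for k
      using that
    proof (induction k)
      case 0 then show ?case by simp
    next
      case (Suc k)
      have aL: "- m + real (Suc k) \<in> L" using L_char Suc.prems by blast
      have "\<beta> (- m + real (Suc k) - 1) - \<beta> (- m + real (Suc k)) = \<kappa>"
        by (rule \<beta>k[OF aL]) simp
      moreover have "- m + real (Suc k) - 1 = - m + real k" by simp
      ultimately show ?case using Suc k0 by simp
    qed
    have u0: "u (- m - 1) = 0" unfolding u_def using mat_onD1[OF mat_tau, of "- m - 1"] L_bounds by force
    have um: "u m = 0" unfolding u_def using mat_onD1[OF mC, of "m + 1"] L_bounds by force
    have uk: "u (- m + real k) = - (of_nat k + 1) * \<beta> (- m)" if "k \<le> N" for k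
      using that
    proof (induction k)
      case 0
      have "\<beta> (- m) = u (- m - 1) - u (- m)" by (rule \<beta>u)
      then show ?case using u0 by simp
    next
      case (Suc k)
      have e1: "\<beta> (- m + real (Suc k)) = u (- m + real (Suc k) - 1) - u (- m + real (Suc k))" by (rule \<beta>u)
      have e2: "- m + real (Suc k) - 1 = - m + real k" by simp
      have e3: "\<beta> (- m + real (Suc k)) = \<beta> (- m)" using \<beta>c Suc.prems by blast
      have "\<beta> (- m) = u (- m + real k) - u (- m + real (Suc k))" using e1 unfolding e2 e3 .
      then have "u (- m + real (Suc k)) = u (- m + real k) - \<beta> (- m)" by simp
      also have "\<dots> = - (of_nat k + 1) * \<beta> (- m) - \<beta> (- m)" using Suc.IH Suc.prems by simp
      also have "\<dots> = - (of_nat (Suc k) + 1) * \<beta> (- m)" by (simp add: algebra_simps)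
      finally show ?case .
    qed
    have "- m + real N = m" using N_eq by simp
    then have "- (of_nat N + 1) * \<beta> (- m) = 0" using uk[of N] um by simp
    moreover have "(of_nat N + 1 :: complex) \<noteq> 0" by (metis of_nat_Suc of_nat_eq_0_iff nat.distinct(1) add.commute)
    ultimately have b0: "\<beta> (- m) = 0" by (metis mult_eq_0_iff neg_equal_0_iff_equal mult_minus_left)
    have "C = mzero"
      unfolding fun_eq_iff mzero_def
    proof (intro allI, rule ccontr)
      fix b a assume nz: "C b a \<noteq> 0"
      have ba: "b = a + 1" using homogL[OF C(2) nz] .
      have aL: "a \<in> L" "b \<in> L" using mat_onD1[OF mC] mat_onD2[OF mC] nz by blast+
      then have "b > - m" using ba L_bounds by force
      then have tn: "\<tau> a (a + 1) \<noteq> 0" using tau_ne[OF aL(2)] ba by simp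
      have "\<exists>k\<le>N. a = - m + real k" using aL(1) L_char[of a] by simp
      then obtain k where k: "k \<le> N" "a = - m + real k" by blast
      have "u a = 0" using uk[OF k(1)] k(2) b0 by simp
      then show False using tn nz ba unfolding u_def by simp
    qed
    then show False using C(3) by simp
  qed
  define e where "e = msc (- 2 / \<kappa>) C"
  define h where "h = msc (- 2 / \<kappa>) B0"
  have es: "e \<in> s" unfolding e_def by (rule lie_sub_msc[OF lie C(1)])
  have he: "homog (\<lambda>i. i) 1 e" unfolding e_def by (rule homog_msc[OF C(2)])
  have eh: "brk L e \<tau> = h" unfolding e_def h_def B0_def brk_msc_left ..
  have dh: "diagm h" using dB0 unfolding h_def diagm_def msc_def by simp
  have hstep: "h a a - h (a - 1) (a - 1) = 2" if "a \<in> L" "a > - m" for a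
  proof -
    have "h a a - h (a - 1) (a - 1) = (- 2 / \<kappa>) * (\<beta> a - \<beta> (a - 1))"
      unfolding h_def msc_def \<beta>_def by (simp add: algebra_simps)
    also have "\<dots> = 2" using \<beta>k[OF that] kne by (simp add: field_simps)
    finally show ?thesis .
  qed
  have hk: "h (- m + real k) (- m + real k) = h (- m) (- m) + 2 * of_nat k" if "k \<le> N" for k
    using that
  proof (induction k)
    case 0 then show ?case by simp
  next
    case (Suc k)
    have aL: "- m + real (Suc k) \<in> L" using L_char Suc.prems by blast
    have "h (- m + real (Suc k)) (- m + real (Suc k)) - h (- m + real (Suc k) - 1) (- m + real (Suc k) - 1) = 2"
      by (rule hstep[OF aL]) simp
    moreover have "- m + real (Suc k) - 1 = - m + real k" by simp
    ultimately show ?case using Suc by (simp add: algebra_simps)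
  qed
  have hd: "h b b - h a a = complex_of_real (2 * (b - a))" if "a \<in> L" "b \<in> L" for a b
  proof -
    have "\<exists>k\<le>N. a = - m + real k" using that(1) L_char[of a] by simp
    then obtain k where k: "k \<le> N" "a = - m + real k" by blast
    have "\<exists>l\<le>N. b = - m + real l" using that(2) L_char[of b] by simp
    then obtain l where l: "l \<le> N" "b = - m + real l" by blast
    show ?thesis using hk[OF k(1)] hk[OF l(1)] k(2) l(2) by simp
  qed
  show ?thesis using es he eh dh hd by blast
qed


lemma L_nil:
  assumes "k > real N" "mat_on L Z" "homog (\<lambda>i. i) k Z"
  shows "Z = mzero"
  unfolding fun_eq_iff mzero_def
proof (intro allI, rule ccontr)
  fix b a assume nz: "Z b a \<noteq> 0"
  have "a \<in> L" "b \<in> L" using mat_onD1[OF assms(2)] mat_onD2[OF assms(2)] nz by blast+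
  then have "b - a \<le> 2 * m" using L_bounds[of a] L_bounds[of b] by linarith
  moreover have "b = a + k" using homogL[OF assms(3) nz] .
  ultimately show False using assms(1) N_eq by simp
qed

lemma lmax_zero: "lmax L (\<lambda>i. i) S s = {mzero}"
proof -
  obtain e h where eh: "e \<in> s" "homog (\<lambda>i. i) 1 e" "brk L e \<tau> = h" "diagm h"
    "\<And>a b. a \<in> L \<Longrightarrow> b \<in> L \<Longrightarrow> h b b - h a a = complex_of_real (2 * (b - a))"
    using eh_exists by blast
  have me: "mat_on L e" using s_mat[OF eh(1)] .
  have zero: "X = mzero" if M: "msubspace L M" "M \<subseteq> sp_set L S \<inter> {X. nonneg (\<lambda>i. i) X}"
      "\<forall>Y\<in>s. \<forall>X\<in>M. brk L Y X \<in> M" and XM: "X \<in> M" for M X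
  proof -
    have Mp: "\<And>X. X \<in> M \<Longrightarrow> mat_on L X \<and> nonneg (\<lambda>i. i) X \<and> brk L \<tau> X \<in> M \<and> brk L e X \<in> M"
      using M ts eh(1) by (auto simp: sp_set_def)
    have hX: "homog (\<lambda>i. i) 0 X"
    proof (rule lemmaA[OF finite_L mat_tau me homog_tau eh(2) eh(3)])
      show "\<And>k Z. mat_on L Z \<Longrightarrow> homog (\<lambda>i. i) k Z \<Longrightarrow> brk L h Z = msc (complex_of_real (2 * k)) Z"
        by (rule H_prop[OF finite_L eh(4) eh(5)])
      show "\<And>k Z. real N < k \<Longrightarrow> mat_on L Z \<Longrightarrow> homog (\<lambda>i. i) k Z \<Longrightarrow> Z = mzero" by (rule L_nil)
      show "\<And>a b. a \<in> L \<Longrightarrow> b \<in> L \<Longrightarrow> b - a \<in> \<int>" by (rule L_intd)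
    qed (use Mp XM in auto)
    have mX: "mat_on L X" using Mp[OF XM] by simp
    have Xsp: "X \<in> sp_set L S" using M(2) XM by auto
    have tX: "brk L \<tau> X = mzero"
    proof (rule homog_neg_nonneg)
      show "homog (\<lambda>i. i) (-1 + 0) (brk L \<tau> X)" by (rule homog_brk[OF homog_tau hX])
      show "nonneg (\<lambda>i. i) (brk L \<tau> X)" using Mp[OF XM] Mp by blast
    qed simp
    have dX: "diagm X" using homog0_diag[OF hX] .
    have st: "X a a = X (a - 1) (a - 1)" if "a \<in> L" "a > - m" for a
    proof -
      have "brk L \<tau> X (a - 1) a = 0" using tX by (simp add: mzero_def)
      then have "\<tau> (a - 1) a * (X a a - X (a - 1) (a - 1)) = 0"
        unfolding brk_tau_Y by (simp add: algebra_simps)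
      then show ?thesis using tau_ne[OF that] by simp
    qed
    have cst: "X (- m + real k) (- m + real k) = X (- m) (- m)" if "k \<le> N" for k
      using that
    proof (induction k)
      case 0 then show ?case by simp
    next
      case (Suc k)
      have aL: "- m + real (Suc k) \<in> L" using L_char Suc.prems by blast
      have "X (- m + real (Suc k)) (- m + real (Suc k)) = X (- m + real (Suc k) - 1) (- m + real (Suc k) - 1)"
        by (rule st[OF aL]) simp
      moreover have "- m + real (Suc k) - 1 = - m + real k" by simp
      ultimately show ?case using Suc by simp
    qed
    have cst': "X a a = X (- m) (- m)" if "a \<in> L" for a
    proof -
      have "\<exists>k\<le>N. a = - m + real k" using that L_char[of a] by simp
      then obtain k where k: "k \<le> N" "a = - m + real k" by blast
      show ?thesis using cst[OF k(1)] k(2) by simp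
    qed
    define x where "x = X (- m) (- m)"
    have spx: "x * S a b = 0" if "a \<in> L" "b \<in> L" for a b
    proof -
      have sp: "(\<Sum>c\<in>L. X c a * S c b) + (\<Sum>c\<in>L. S a c * X c b) = 0"
        using Xsp that unfolding sp_set_def by blast
      have s1: "(\<Sum>c\<in>L. X c a * S c b) = X a a * S a b"
      proof -
        have "X c a = 0" if "c \<noteq> a" for c using dX that unfolding diagm_def by blast
        then show ?thesis using sum_single[OF finite_L, where z=a and f="\<lambda>c. X c a * S c b"] that(1) by simp
      qed
      have s2: "(\<Sum>c\<in>L. S a c * X c b) = S a b * X b b"
      proof -
        have "X c b = 0" if "c \<noteq> b" for c using dX that unfolding diagm_def by blast
        then show ?thesis using sum_single[OF finite_L, where z=b and f="\<lambda>c. S a c * X c b"] that(2) by simp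
      qed
      have "2 * (x * S a b) = 0" using sp s1 s2 cst'[OF that(1)] cst'[OF that(2)] unfolding x_def
        by (simp add: algebra_simps)
      then show ?thesis by simp
    qed
    have x0: "x = 0"
    proof (rule ccontr)
      assume xn: "x \<noteq> 0"
      have nd: "nondeg L S" using Sok by (simp add: Lform_ok_def)
      let ?v = "\<lambda>a. if a = m then (1::complex) else 0"
      have "\<forall>b\<in>L. (\<Sum>a\<in>L. ?v a * S a b) = 0"
      proof
        fix b assume b: "b \<in> L"
        have "(\<Sum>a\<in>L. ?v a * S a b) = S m b"
          using sum_single[OF finite_L, where z=m and f="\<lambda>a. ?v a * S a b"] m_in by simp
        also have "\<dots> = 0" using spx[OF m_in b] xn by simp
        finally show "(\<Sum>a\<in>L. ?v a * S a b) = 0" .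
      qed
      moreover have "(\<forall>b\<in>L. (\<Sum>a\<in>L. ?v a * S a b) = 0) \<longrightarrow> (\<forall>a\<in>L. ?v a = 0)"
        using nd unfolding nondeg_def by (rule spec)
      ultimately have "\<forall>a\<in>L. ?v a = 0" by (rule rev_mp)
      then have "?v m = 0" using m_in by (rule bspec)
      then show False by simp
    qed
    show "X = mzero" unfolding fun_eq_iff mzero_def
    proof (intro allI)
      fix b a
      show "X b a = 0"
      proof (cases "b = a \<and> a \<in> L")
        case True then show ?thesis using cst' x0 unfolding x_def by simp
      next
        case False
        show ?thesis
        proof (cases "b = a")
          case True
          then have "a \<notin> L" using False by simp
          then show ?thesis using mat_onD2[OF mX] by simp
        next
          case False
          then show ?thesis using dX unfolding diagm_def by blast
        qed
      qed
    qed
  qed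
  have fz: "msubspace L {mzero} \<and> {mzero} \<subseteq> sp_set L S \<inter> {X. nonneg (\<lambda>i. i) X} \<and>
       (\<forall>Y\<in>s. \<forall>X\<in>{mzero}. brk L Y X \<in> {mzero})"
  proof (intro conjI)
    show "msubspace L {mzero}"
      by (simp add: msubspace_def mat_on_def mzero_def madd_def msc_def fun_eq_iff)
    show "{mzero} \<subseteq> sp_set L S \<inter> {X. nonneg (\<lambda>i. i) X}"
      by (simp add: sp_set_def nonneg_def mat_on_def mzero_def)
    show "\<forall>Y\<in>s. \<forall>X\<in>{mzero}. brk L Y X \<in> {mzero}" by simp
  qed
  show ?thesis unfolding lmax_def
  proof
    show "\<Union>{M. msubspace L M \<and> M \<subseteq> sp_set L S \<inter> {X. nonneg (\<lambda>i. i) X} \<and>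
       (\<forall>Y\<in>s. \<forall>X\<in>M. brk L Y X \<in> M)} \<subseteq> {mzero}"
    proof
      fix X assume "X \<in> \<Union>{M. msubspace L M \<and> M \<subseteq> sp_set L S \<inter> {X. nonneg (\<lambda>i. i) X} \<and>
         (\<forall>Y\<in>s. \<forall>X\<in>M. brk L Y X \<in> M)}"
      then obtain M where "msubspace L M" "M \<subseteq> sp_set L S \<inter> {X. nonneg (\<lambda>i. i) X}"
         "\<forall>Y\<in>s. \<forall>X\<in>M. brk L Y X \<in> M" "X \<in> M" by blast
      then show "X \<in> {mzero}" using zero by blast
    qed
    show "{mzero} \<subseteq> \<Union>{M. msubspace L M \<and> M \<subseteq> sp_set L S \<inter> {X. nonneg (\<lambda>i. i) X} \<and>
       (\<forall>Y\<in>s. \<forall>X\<in>M. brk L Y X \<in> M)}" using fz by blast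
  qed
qed

end

theorem mainTheorem14:
  shows "(\<forall>(p::nat) s.
            graded_sl2_sub (Vidx p) Vdeg (Vform p) s \<and> Vdelta p \<in> s \<and>
            irreducible_sub (Vidx p) s (Espace p) \<and> irreducible_sub (Vidx p) s (Fspace p) \<longrightarrow>
            lie_sub (Vidx p) (lmax (Vidx p) Vdeg (Vform p) s) \<and>
            iso_sl2 (Vidx p) (lmax (Vidx p) Vdeg (Vform p) s)) \<and>
         (\<forall>(m::real) S \<tau> s.
            m \<in> halfodd \<and> m > 0 \<and> Lform_ok m S \<and> Ltau_ok m \<tau> \<and> \<tau> \<in> sp_set (Lidx m) S \<and>
            graded_sl2_sub (Lidx m) (\<lambda>i. i) S s \<and> \<tau> \<in> s \<and>
            irreducible_sub (Lidx m) s {v. \<forall>a. a \<notin> Lidx m \<longrightarrow> v a = 0} \<longrightarrow>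
            lmax (Lidx m) (\<lambda>i. i) S s = {mzero})"
proof (rule conjI)
  show "\<forall>(p::nat) s.
            graded_sl2_sub (Vidx p) Vdeg (Vform p) s \<and> Vdelta p \<in> s \<and>
            irreducible_sub (Vidx p) s (Espace p) \<and> irreducible_sub (Vidx p) s (Fspace p) \<longrightarrow>
            lie_sub (Vidx p) (lmax (Vidx p) Vdeg (Vform p) s) \<and>
            iso_sl2 (Vidx p) (lmax (Vidx p) Vdeg (Vform p) s)"
  proof (intro allI impI)
    fix p s
    assume H: "graded_sl2_sub (Vidx p) Vdeg (Vform p) s \<and> Vdelta p \<in> s \<and>
              irreducible_sub (Vidx p) s (Espace p) \<and> irreducible_sub (Vidx p) s (Fspace p)"
    interpret pcase p s by (rule pcase.intro) (use H in \<open>auto simp: irreducible_sub_def\<close>)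
    show "lie_sub (Vidx p) (lmax (Vidx p) Vdeg (Vform p) s) \<and>
              iso_sl2 (Vidx p) (lmax (Vidx p) Vdeg (Vform p) s)" by (rule pcase_result)
  qed
next
  show "\<forall>(m::real) S \<tau> s.
            m \<in> halfodd \<and> m > 0 \<and> Lform_ok m S \<and> Ltau_ok m \<tau> \<and> \<tau> \<in> sp_set (Lidx m) S \<and>
            graded_sl2_sub (Lidx m) (\<lambda>i. i) S s \<and> \<tau> \<in> s \<and>
            irreducible_sub (Lidx m) s {v. \<forall>a. a \<notin> Lidx m \<longrightarrow> v a = 0} \<longrightarrow>
            lmax (Lidx m) (\<lambda>i. i) S s = {mzero}"
  proof (intro allI impI)
    fix m :: real and S \<tau> s
    assume H: "m \<in> halfodd \<and> m > 0 \<and> Lform_ok m S \<and> Ltau_ok m \<tau> \<and> \<tau> \<in> sp_set (Lidx m) S \<and>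
              graded_sl2_sub (Lidx m) (\<lambda>i. i) S s \<and> \<tau> \<in> s \<and>
              irreducible_sub (Lidx m) s {v. \<forall>a. a \<notin> Lidx m \<longrightarrow> v a = 0}"
    interpret lcase m S \<tau> s by (rule lcase.intro) (use H in auto)
    show "lmax (Lidx m) (\<lambda>i. i) S s = {mzero}" by (rule lmax_zero)
  qed
qed

end
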